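(* Let $L$ be a multisorted algebra in the positive existential signature satisfying axioms (1), (2), (3), (7), (8), (9), (10). Let $\varphi$ be an almost morphism from $L$ to the positive existential algebra $A(W)$ of some set $W$. Then there is a set $W^+$ and a morphism $\varphi^+\colon L\to A(W^+)$ of positive existential algebras such that $\ker(\varphi^+)\subseteq\ker(\varphi)$. In particular, if $\varphi$ is injective on each sort, then $\varphi^+$ is an embedding.
   Context: The Boolean prime ideal theorem (equivalently, compactness) is assumed. Signature. There is a sort $n$ for each $n\ge0$. For every function $\alpha\colon\{1,\dots,n\}\to\{1,\dots,k\}$ there is a unary function symbol ("substitution") $\alpha\colon n\to k$ (argument of sort $n$, value of sort $k$). Each sort has $0,1,\vee,\wedge$; for each $n$ there is $\exists\colon n+1\to n$ (positive existential signature). For $\alpha\colon k\to n$, $\beta\colon n\to m$, $\beta\circ\alpha$ is the substitution symbol of the composite function. The associated cylindrification of $\exists\colon n+1\to n$ is $c\colon n\to n+1$, $c(i)=i$; $\exists^{(n)}$ is $n$-fold projection; $x\le y$ means $x=x\wedge y$. For a set $W$: $\alpha^{\mathrm{tuple}}(x_1,\dots,x_k)=(x_{\alpha(1)},\dots,x_{\alpha(n)})$, $\alpha^{\mathrm{relation}}(r)=\{\bar x\in W^k:\alpha^{\mathrm{tuple}}(\bar x)\in r\}$. The positive existential algebra $A(W)$ interprets sort $n$ as $\mathcal P(W^n)$, $\alpha$ as $\alpha^{\mathrm{relation}}$, $0,1,\vee,\wedge$ as $\emptyset,W^n,\cup,\cap$, and $\exists(r)=\{\bar x:\exists y\,(\bar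 x,y)\in r\}$. An almost morphism $\varphi\colon L\to A(W)$ is a sort-preserving family of maps commuting with all substitutions and with $0,1,\vee,\wedge$, and satisfying $\exists(\varphi(r))\subseteq\varphi(\exists(r))$. A morphism additionally commutes with $\exists$. For a map $f$, $\ker(f)=\{(a,a'): a,a' \text{ of the same sort}, f(a)=f(a')\}$. Axioms: (1) each sort is a bounded distributive lattice; (2) substitutions preserve $0,1,\vee,\wedge$; (3) $(\beta\circ\alpha)(r)=\beta(\alpha(r))$; (7) $\exists(0)=0$, $\exists(r\vee s)=\exists(r)\vee\exists(s)$; (8) $r\le c(\exists(r))$; (9) $\exists(r\wedge c(s))=\exists(r)\wedge s$; (10) for substitutions $\alpha_i\colon k_i\to m$ ($i=1,\dots,n$) and $\beta_i\colon k_i+1\to m+n$ with $\beta_i(j)=\alpha_i(j)$ for $j\le k_i$, $\beta_i(k_i+1)=m+i$: $\exists^{(n)}(\bigwedge_i\beta_i(r_i))=\bigwedge_i\alpha_i(\exists(r_i))$ for all $r_i$ of sort $k_i+1$. *)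

theory Defs
  imports Main "HOL-Library.FuncSet"
begin

text \<open>A substitution symbol alpha : n -> k is a function {1..n} -> {1..k}, represented
  extensionally (value undefined outside {1..n}).
  sb n k alpha : sort n -> sort k;  ex n : sort (n+1) -> sort n.\<close>

record 'a pe_alg =
  car :: "nat \<Rightarrow> 'a set"
  sb  :: "nat \<Rightarrow> nat \<Rightarrow> (nat \<Rightarrow> nat) \<Rightarrow> 'a \<Rightarrow> 'a"
  zr  :: "nat \<Rightarrow> 'a"
  on  :: "nat \<Rightarrow> 'a"
  jn  :: "nat \<Rightarrow> 'a \<Rightarrow> 'a \<Rightarrow> 'a"
  mt  :: "nat \<Rightarrow> 'a \<Rightarrow> 'a \<Rightarrow> 'a"
  ex  :: "nat \<Rightarrow> 'a \<Rightarrow> 'a"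

definition substs :: "nat \<Rightarrow> nat \<Rightarrow> (nat \<Rightarrow> nat) set" where
  "substs n k = {1..n} \<rightarrow>\<^sub>E {1..k}"

definition cyl :: "nat \<Rightarrow> nat \<Rightarrow> nat" where
  "cyl n = restrict id {1..n}"

definition le :: "('a, 'b) pe_alg_scheme \<Rightarrow> nat \<Rightarrow> 'a \<Rightarrow> 'a \<Rightarrow> bool" where
  "le L n x y \<longleftrightarrow> x = mt L n x y"

fun exn :: "('a, 'b) pe_alg_scheme \<Rightarrow> nat \<Rightarrow> nat \<Rightarrow> 'a \<Rightarrow> 'a" where
  "exn L m 0 r = r"
| "exn L m (Suc n) r = exn L m n (ex L (m + n) r)"

definition bigmeet :: "('a, 'b) pe_alg_scheme \<Rightarrow> nat \<Rightarrow> 'a list \<Rightarrow> 'a" where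
  "bigmeet L m xs = foldr (mt L m) xs (on L m)"

definition pe_closed :: "('a, 'b) pe_alg_scheme \<Rightarrow> bool" where
  "pe_closed L \<longleftrightarrow>
    (\<forall>n. zr L n \<in> car L n \<and> on L n \<in> car L n) \<and>
    (\<forall>n. \<forall>x\<in>car L n. \<forall>y\<in>car L n. jn L n x y \<in> car L n \<and> mt L n x y \<in> car L n) \<and>
    (\<forall>n k. \<forall>\<alpha>\<in>substs n k. \<forall>x\<in>car L n. sb L n k \<alpha> x \<in> car L k) \<and>
    (\<forall>n. \<forall>x\<in>car L (Suc n). ex L n x \<in> car L n)"

definition ax1 :: "('a, 'b) pe_alg_scheme \<Rightarrow> bool" where
  "ax1 L \<longleftrightarrow> (\<forall>n. \<forall>x\<in>car L n. \<forall>y\<in>car L n. \<forall>z\<in>car L n.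
      jn L n (jn L n x y) z = jn L n x (jn L n y z) \<and>
      mt L n (mt L n x y) z = mt L n x (mt L n y z) \<and>
      jn L n x y = jn L n y x \<and>
      mt L n x y = mt L n y x \<and>
      jn L n x (mt L n x y) = x \<and>
      mt L n x (jn L n x y) = x \<and>
      mt L n x (jn L n y z) = jn L n (mt L n x y) (mt L n x z) \<and>
      jn L n x (zr L n) = x \<and>
      mt L n x (on L n) = x)"

definition ax2 :: "('a, 'b) pe_alg_scheme \<Rightarrow> bool" where
  "ax2 L \<longleftrightarrow> (\<forall>n k. \<forall>\<alpha>\<in>substs n k.
      sb L n k \<alpha> (zr L n) = zr L k \<and> sb L n k \<alpha> (on L n) = on L k \<and>
      (\<forall>x\<in>car L n. \<forall>y\<in>car L n.
         sb L n k \<alpha> (jn L n x y) = jn L k (sb L n k \<alpha> x) (sb L n k \<alpha> y) \<and>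
         sb L n k \<alpha> (mt L n x y) = mt L k (sb L n k \<alpha> x) (sb L n k \<alpha> y)))"

definition ax3 :: "('a, 'b) pe_alg_scheme \<Rightarrow> bool" where
  "ax3 L \<longleftrightarrow> (\<forall>k n m. \<forall>\<alpha>\<in>substs k n. \<forall>\<beta>\<in>substs n m. \<forall>r\<in>car L k.
      sb L k m (compose {1..k} \<beta> \<alpha>) r = sb L n m \<beta> (sb L k n \<alpha> r))"

definition ax7 :: "('a, 'b) pe_alg_scheme \<Rightarrow> bool" where
  "ax7 L \<longleftrightarrow> (\<forall>n. ex L n (zr L (Suc n)) = zr L n \<and>
      (\<forall>r\<in>car L (Suc n). \<forall>s\<in>car L (Suc n).
         ex L n (jn L (Suc n) r s) = jn L n (ex L n r) (ex L n s)))"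

definition ax8 :: "('a, 'b) pe_alg_scheme \<Rightarrow> bool" where
  "ax8 L \<longleftrightarrow> (\<forall>n. \<forall>r\<in>car L (Suc n).
      le L (Suc n) r (sb L n (Suc n) (cyl n) (ex L n r)))"

definition ax9 :: "('a, 'b) pe_alg_scheme \<Rightarrow> bool" where
  "ax9 L \<longleftrightarrow> (\<forall>n. \<forall>r\<in>car L (Suc n). \<forall>s\<in>car L n.
      ex L n (mt L (Suc n) r (sb L n (Suc n) (cyl n) s)) = mt L n (ex L n r) s)"

definition ax10 :: "('a, 'b) pe_alg_scheme \<Rightarrow> bool" where
  "ax10 L \<longleftrightarrow> (\<forall>n m (k :: nat \<Rightarrow> nat) (\<alpha> :: nat \<Rightarrow> nat \<Rightarrow> nat) (\<beta> :: nat \<Rightarrow> nat \<Rightarrow> nat)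
       (r :: nat \<Rightarrow> 'a).
      (\<forall>i\<in>{1..n}. \<alpha> i \<in> substs (k i) m \<and> \<beta> i \<in> substs (Suc (k i)) (m + n) \<and>
          (\<forall>j\<in>{1..k i}. \<beta> i j = \<alpha> i j) \<and> \<beta> i (Suc (k i)) = m + i \<and>
          r i \<in> car L (Suc (k i)))
      \<longrightarrow> exn L m n (bigmeet L (m + n) (map (\<lambda>i. sb L (Suc (k i)) (m + n) (\<beta> i) (r i)) [1..<Suc n]))
          = bigmeet L m (map (\<lambda>i. sb L (k i) m (\<alpha> i) (ex L (k i) (r i))) [1..<Suc n]))"

definition pe_algebra :: "('a, 'b) pe_alg_scheme \<Rightarrow> bool" where
  "pe_algebra L \<longleftrightarrow> pe_closed L \<and> ax1 L \<and> ax2 L \<and> ax3 L \<and> ax7 L \<and> ax8 L \<and> ax9 L \<and> ax10 L"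

text \<open>W^n as lists of length n over W; tuple positions are 1-based (position i is xs ! (i-1)).\<close>
definition tuples :: "'w set \<Rightarrow> nat \<Rightarrow> 'w list set" where
  "tuples W n = {xs. length xs = n \<and> set xs \<subseteq> W}"

definition subst_tuple :: "nat \<Rightarrow> (nat \<Rightarrow> nat) \<Rightarrow> 'w list \<Rightarrow> 'w list" where
  "subst_tuple n \<alpha> xs = map (\<lambda>i. xs ! (\<alpha> i - 1)) [1..<Suc n]"

definition A :: "'w set \<Rightarrow> 'w list set pe_alg" where
  "A W = \<lparr> car = (\<lambda>n. Pow (tuples W n)),
           sb = (\<lambda>n k \<alpha> r. {xs \<in> tuples W k. subst_tuple n \<alpha> xs \<in> r}),
           zr = (\<lambda>n. {}),
           on = (\<lambda>n. tuples W n),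
           jn = (\<lambda>n. (\<union>)),
           mt = (\<lambda>n. (\<inter>)),
           ex = (\<lambda>n r. {xs \<in> tuples W n. \<exists>y\<in>W. xs @ [y] \<in> r}) \<rparr>"

definition hom_base :: "('a, 'b) pe_alg_scheme \<Rightarrow> 'w set \<Rightarrow> (nat \<Rightarrow> 'a \<Rightarrow> 'w list set) \<Rightarrow> bool" where
  "hom_base L W \<phi> \<longleftrightarrow>
    (\<forall>n. \<forall>a\<in>car L n. \<phi> n a \<in> car (A W) n) \<and>
    (\<forall>n k. \<forall>\<alpha>\<in>substs n k. \<forall>a\<in>car L n. \<phi> k (sb L n k \<alpha> a) = sb (A W) n k \<alpha> (\<phi> n a)) \<and>
    (\<forall>n. \<phi> n (zr L n) = zr (A W) n \<and> \<phi> n (on L n) = on (A W) n) \<and>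
    (\<forall>n. \<forall>a\<in>car L n. \<forall>b\<in>car L n.
        \<phi> n (jn L n a b) = jn (A W) n (\<phi> n a) (\<phi> n b) \<and>
        \<phi> n (mt L n a b) = mt (A W) n (\<phi> n a) (\<phi> n b))"

definition almost_morphism :: "('a, 'b) pe_alg_scheme \<Rightarrow> 'w set \<Rightarrow> (nat \<Rightarrow> 'a \<Rightarrow> 'w list set) \<Rightarrow> bool" where
  "almost_morphism L W \<phi> \<longleftrightarrow> hom_base L W \<phi> \<and>
    (\<forall>n. \<forall>r\<in>car L (Suc n). ex (A W) n (\<phi> (Suc n) r) \<subseteq> \<phi> n (ex L n r))"

definition morphism :: "('a, 'b) pe_alg_scheme \<Rightarrow> 'w set \<Rightarrow> (nat \<Rightarrow> 'a \<Rightarrow> 'w list set) \<Rightarrow> bool" where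
  "morphism L W \<phi> \<longleftrightarrow> hom_base L W \<phi> \<and>
    (\<forall>n. \<forall>r\<in>car L (Suc n). ex (A W) n (\<phi> (Suc n) r) = \<phi> n (ex L n r))"

definition ker :: "('a, 'b) pe_alg_scheme \<Rightarrow> (nat \<Rightarrow> 'a \<Rightarrow> 'c) \<Rightarrow> (nat \<times> 'a \<times> 'a) set" where
  "ker L \<phi> = {(n, a, a'). a \<in> car L n \<and> a' \<in> car L n \<and> \<phi> n a = \<phi> n a'}"

end

theory Submission
  imports Defs
begin

lemma compactness:
  fixes C :: "'i set" and sat :: "'i \<Rightarrow> ('x \<Rightarrow> bool) \<Rightarrow> bool" and supp :: "'i \<Rightarrow> 'x set"
  assumes fin: "\<And>i. i \<in> C \<Longrightarrow> finite (supp i)"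
    and loc: "\<And>i f g. i \<in> C \<Longrightarrow> (\<And>x. x \<in> supp i \<Longrightarrow> f x = g x) \<Longrightarrow> sat i f = sat i g"
    and fsat: "\<And>F. F \<subseteq> C \<Longrightarrow> finite F \<Longrightarrow> \<exists>f. \<forall>i\<in>F. sat i f"
  shows "\<exists>f. \<forall>i\<in>C. sat i f"
proof -
  define good where "good Q \<longleftrightarrow> (\<forall>F. F \<subseteq> C \<longrightarrow> finite F \<longrightarrow>
     (\<exists>f. (\<forall>i\<in>F. sat i f) \<and> (\<forall>(x,b)\<in>Q. x \<in> \<Union>(supp ` F) \<longrightarrow> f x = b)))" for Q :: "('x \<times> bool) set"
  have goodD: "\<exists>f. (\<forall>i\<in>F. sat i f) \<and> (\<forall>(x,b)\<in>Q. x \<in> \<Union>(supp ` F) \<longrightarrow> f x = b)"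
    if "good Q" "F \<subseteq> C" "finite F" for Q F using that unfolding good_def by simp
  define A where "A = {Q. good Q}"
  have "\<forall>Ch\<in>chains A. \<exists>U\<in>A. \<forall>X\<in>Ch. X \<subseteq> U"
  proof
    fix Ch assume ch: "Ch \<in> chains A"
    show "\<exists>U\<in>A. \<forall>X\<in>Ch. X \<subseteq> U"
    proof (cases "Ch = {}")
      case True
      have "good {}" unfolding good_def using fsat by auto
      then show ?thesis using True A_def by auto
    next
      case False
      have "good (\<Union>Ch)" unfolding good_def
      proof (intro allI impI)
        fix F assume F: "F \<subseteq> C" "finite F"
        define S where "S = (\<Union>Ch) \<inter> (\<Union>(supp ` F) \<times> UNIV)"
        have "finite (\<Union>(supp ` F))" using F fin by (meson finite_UN_I subset_iff)
        then have "finite (\<Union>(supp ` F) \<times> (UNIV::bool set))" by (intro finite_cartesian_product) auto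
        then have fS: "finite S" unfolding S_def by auto
        have s1: "S \<subseteq> \<Union>Ch" unfolding S_def by auto
        have s2: "subset.chain A Ch" using ch by (simp add: chains_alt_def)
        obtain B where B: "B \<in> Ch" "S \<subseteq> B"
          using finite_subset_Union_chain[OF fS s1 False s2] by metis
        then have "good B" using ch unfolding chains_def A_def by auto
        then obtain f where f: "\<forall>i\<in>F. sat i f" "\<forall>(x,b)\<in>B. x \<in> \<Union>(supp ` F) \<longrightarrow> f x = b"
          using goodD[OF _ F] by blast
        have "\<forall>(x,b)\<in>\<Union>Ch. x \<in> \<Union>(supp ` F) \<longrightarrow> f x = b"
          using f(2) B(2) unfolding S_def by blast
        then show "\<exists>f. (\<forall>i\<in>F. sat i f) \<and> (\<forall>(x,b)\<in>\<Union>Ch. x \<in> \<Union>(supp ` F) \<longrightarrow> f x = b)"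
          using f(1) by blast
      qed
      then show ?thesis unfolding A_def by auto
    qed
  qed
  from Zorn_Lemma2[OF this] obtain M where M: "M \<in> A" "\<And>X. X \<in> A \<Longrightarrow> M \<subseteq> X \<Longrightarrow> X = M"
    by blast
  have gM: "good M" using M A_def by auto
  have tot: "(x,True) \<in> M \<or> (x,False) \<in> M" for x
  proof (rule ccontr)
    assume nx: "\<not> ((x,True) \<in> M \<or> (x,False) \<in> M)"
    have ng: "\<not> good (insert (x,b) M)" for b
    proof
      assume "good (insert (x,b) M)"
      then have "insert (x,b) M \<in> A" using A_def by auto
      then have "insert (x,b) M = M" using M(2) by blast
      then have "(x,b) \<in> M" by blast
      with nx show False by (cases b) auto
    qed
    obtain F1 where F1: "F1 \<subseteq> C" "finite F1" "\<not> (\<exists>f. (\<forall>i\<in>F1. sat i f) \<and> (\<forall>(y,c)\<in>insert (x,True) M. y \<in> \<Union>(supp ` F1) \<longrightarrow> f y = c))"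
      using ng[of True] unfolding good_def by blast
    obtain F2 where F2: "F2 \<subseteq> C" "finite F2" "\<not> (\<exists>f. (\<forall>i\<in>F2. sat i f) \<and> (\<forall>(y,c)\<in>insert (x,False) M. y \<in> \<Union>(supp ` F2) \<longrightarrow> f y = c))"
      using ng[of False] unfolding good_def by blast
    have h1: "F1 \<union> F2 \<subseteq> C" and h2: "finite (F1 \<union> F2)" using F1 F2 by auto
    from goodD[OF gM h1 h2] obtain f where f: "\<forall>i\<in>F1 \<union> F2. sat i f" "\<forall>(y,c)\<in>M. y \<in> \<Union>(supp ` (F1 \<union> F2)) \<longrightarrow> f y = c"
      by blast
    show False
    proof (cases "f x")
      case True
      have "\<forall>(y,c)\<in>insert (x,True) M. y \<in> \<Union>(supp ` F1) \<longrightarrow> f y = c"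
        using f(2) True by auto
      moreover have "\<forall>i\<in>F1. sat i f" using f(1) by auto
      ultimately show False using F1(3) by blast
    next
      case False
      have "\<forall>(y,c)\<in>insert (x,False) M. y \<in> \<Union>(supp ` F2) \<longrightarrow> f y = c"
        using f(2) False by auto
      moreover have "\<forall>i\<in>F2. sat i f" using f(1) by auto
      ultimately show False using F2(3) by blast
    qed
  qed
  define f0 where "f0 x = ((x,True) \<in> M)" for x
  have "sat i f0" if i: "i \<in> C" for i
  proof -
    have "{i} \<subseteq> C" "finite {i}" using i by auto
    from goodD[OF gM this] obtain g where g: "sat i g" "\<forall>(y,c)\<in>M. y \<in> supp i \<longrightarrow> g y = c"
      by auto
    have "g y = f0 y" if "y \<in> supp i" for y
      using tot[of y] g(2) that unfolding f0_def by (cases "g y") auto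
    then show ?thesis using loc[OF i, of f0 g] g(1) by auto
  qed
  then show ?thesis by blast
qed


locale dl =
  fixes S :: "'a set" and mt jn :: "'a \<Rightarrow> 'a \<Rightarrow> 'a" and z tp :: 'a
  assumes cz: "z \<in> S" and ctp: "tp \<in> S"
    and cm: "x \<in> S \<Longrightarrow> y \<in> S \<Longrightarrow> mt x y \<in> S"
    and cj: "x \<in> S \<Longrightarrow> y \<in> S \<Longrightarrow> jn x y \<in> S"
    and jassoc: "x \<in> S \<Longrightarrow> y \<in> S \<Longrightarrow> w \<in> S \<Longrightarrow> jn (jn x y) w = jn x (jn y w)"
    and massoc: "x \<in> S \<Longrightarrow> y \<in> S \<Longrightarrow> w \<in> S \<Longrightarrow> mt (mt x y) w = mt x (mt y w)"
    and jcomm: "x \<in> S \<Longrightarrow> y \<in> S \<Longrightarrow> jn x y = jn y x"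
    and mcomm: "x \<in> S \<Longrightarrow> y \<in> S \<Longrightarrow> mt x y = mt y x"
    and jabs: "x \<in> S \<Longrightarrow> y \<in> S \<Longrightarrow> jn x (mt x y) = x"
    and mabs: "x \<in> S \<Longrightarrow> y \<in> S \<Longrightarrow> mt x (jn x y) = x"
    and dist: "x \<in> S \<Longrightarrow> y \<in> S \<Longrightarrow> w \<in> S \<Longrightarrow> mt x (jn y w) = jn (mt x y) (mt x w)"
    and jz: "x \<in> S \<Longrightarrow> jn x z = x"
    and mtp: "x \<in> S \<Longrightarrow> mt x tp = x"
begin

definition leq where "leq x y \<longleftrightarrow> x = mt x y"

lemma midem: "x \<in> S \<Longrightarrow> mt x x = x"
  by (metis jabs mabs cm)

lemma mt_self_distrib: "s \<in> S \<Longrightarrow> u \<in> S \<Longrightarrow> v \<in> S \<Longrightarrow> mt s (mt u v) = mt (mt s u) (mt s v)"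
proof -
  assume a: "s \<in> S" "u \<in> S" "v \<in> S"
  have "mt (mt s u) (mt s v) = mt s (mt u (mt s v))" using a by (simp add: massoc cm)
  also have "mt u (mt s v) = mt s (mt u v)" using a by (metis massoc mcomm)
  also have "mt s (mt s (mt u v)) = mt s (mt u v)" using a by (metis massoc midem cm)
  finally show ?thesis by simp
qed

lemma leq_refl: "x \<in> S \<Longrightarrow> leq x x"
  by (simp add: leq_def midem)

lemma leq_m1: "x \<in> S \<Longrightarrow> y \<in> S \<Longrightarrow> leq (mt x y) x"
  unfolding leq_def by (metis massoc mcomm midem cm)

lemma leq_m2: "x \<in> S \<Longrightarrow> y \<in> S \<Longrightarrow> leq (mt x y) y"
  unfolding leq_def by (metis massoc midem cm)

lemma leq_trans: "x \<in> S \<Longrightarrow> y \<in> S \<Longrightarrow> w \<in> S \<Longrightarrow> leq x y \<Longrightarrow> leq y w \<Longrightarrow> leq x w"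
  unfolding leq_def by (metis massoc)

lemma leq_mono: "a \<in> S \<Longrightarrow> b \<in> S \<Longrightarrow> c \<in> S \<Longrightarrow> d \<in> S \<Longrightarrow> leq a b \<Longrightarrow> leq c d \<Longrightarrow> leq (mt a c) (mt b d)"
  unfolding leq_def
proof -
  assume S: "a \<in> S" "b \<in> S" "c \<in> S" "d \<in> S" and h: "a = mt a b" "c = mt c d"
  have "mt (mt a c) (mt b d) = mt (mt a b) (mt c d)"
    using S by (metis massoc mcomm cm)
  then show "mt a c = mt (mt a c) (mt b d)" using h by simp
qed

lemma leq_glb: "a \<in> S \<Longrightarrow> b \<in> S \<Longrightarrow> c \<in> S \<Longrightarrow> leq c a \<Longrightarrow> leq c b \<Longrightarrow> leq c (mt a b)"
  unfolding leq_def by (metis massoc)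

lemma leq_j1: "x \<in> S \<Longrightarrow> y \<in> S \<Longrightarrow> leq x (jn x y)"
  unfolding leq_def by (simp add: mabs)

lemma leq_j2: "x \<in> S \<Longrightarrow> y \<in> S \<Longrightarrow> leq y (jn x y)"
  unfolding leq_def by (metis jcomm mabs)

lemma leq_jn_eq: "x \<in> S \<Longrightarrow> y \<in> S \<Longrightarrow> leq x y \<Longrightarrow> jn x y = y"
  unfolding leq_def by (metis jabs jcomm mcomm)

lemma jn_eq_leq: "x \<in> S \<Longrightarrow> y \<in> S \<Longrightarrow> jn x y = y \<Longrightarrow> leq x y"
  unfolding leq_def by (metis mabs)

lemma leq_tp: "x \<in> S \<Longrightarrow> leq x tp"
  unfolding leq_def by (simp add: mtp)

lemma leq_z: "x \<in> S \<Longrightarrow> leq z x"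
  unfolding leq_def by (metis cz jcomm jz mabs)

lemma mtp': "x \<in> S \<Longrightarrow> mt tp x = x"
  using ctp mcomm mtp by metis

lemma leq_lub: "a \<in> S \<Longrightarrow> b \<in> S \<Longrightarrow> c \<in> S \<Longrightarrow> leq a c \<Longrightarrow> leq b c \<Longrightarrow> leq (jn a b) c"
proof -
  assume S: "a \<in> S" "b \<in> S" "c \<in> S" and h: "leq a c" "leq b c"
  have "jn a c = c" "jn b c = c" using leq_jn_eq S h by auto
  then have "jn (jn a b) c = c" using S by (metis jassoc)
  then show ?thesis using jn_eq_leq S cj by metis
qed

definition pf where "pf P \<longleftrightarrow> P \<subseteq> S \<and> tp \<in> P \<and> z \<notin> P \<and>
   (\<forall>a\<in>S. \<forall>b\<in>S. mt a b \<in> P \<longleftrightarrow> a \<in> P \<and> b \<in> P) \<and>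
   (\<forall>a\<in>S. \<forall>b\<in>S. jn a b \<in> P \<longleftrightarrow> a \<in> P \<or> b \<in> P)"

lemma pf_up: "pf P \<Longrightarrow> a \<in> P \<Longrightarrow> b \<in> S \<Longrightarrow> leq a b \<Longrightarrow> b \<in> P"
  unfolding pf_def leq_def by (metis subsetD)

theorem pft:
  assumes GS: "G \<subseteq> S" and oG: "tp \<in> G"
    and Gup: "\<And>a b. a \<in> G \<Longrightarrow> b \<in> S \<Longrightarrow> leq a b \<Longrightarrow> b \<in> G"
    and Gm: "\<And>a b. a \<in> G \<Longrightarrow> b \<in> G \<Longrightarrow> mt a b \<in> G"
    and JS: "J \<subseteq> S" and zJ: "z \<in> J"
    and Jdown: "\<And>a b. b \<in> J \<Longrightarrow> a \<in> S \<Longrightarrow> leq a b \<Longrightarrow> a \<in> J"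
    and Jj: "\<And>a b. a \<in> J \<Longrightarrow> b \<in> J \<Longrightarrow> jn a b \<in> J"
    and disj: "G \<inter> J = {}"
  shows "\<exists>P. pf P \<and> G \<subseteq> P \<and> P \<inter> J = {}"
proof -
  define A where "A = {P. G \<subseteq> P \<and> P \<subseteq> S \<and> (\<forall>a\<in>P. \<forall>b\<in>S. leq a b \<longrightarrow> b \<in> P)
     \<and> (\<forall>a\<in>P. \<forall>b\<in>P. mt a b \<in> P) \<and> P \<inter> J = {}}"
  have "\<forall>C\<in>chains A. \<exists>U\<in>A. \<forall>X\<in>C. X \<subseteq> U"
  proof
    fix C assume C: "C \<in> chains A"
    show "\<exists>U\<in>A. \<forall>X\<in>C. X \<subseteq> U"
    proof (cases "C = {}")
      case True
      have "G \<in> A" unfolding A_def using GS Gup Gm disj by auto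
      then show ?thesis using True by auto
    next
      case False
      have CA: "C \<subseteq> A" and ch: "\<forall>X\<in>C. \<forall>Y\<in>C. X \<subseteq> Y \<or> Y \<subseteq> X"
        using C unfolding chains_def chain_subset_def by auto
      have "\<Union>C \<in> A"
      proof -
        have 1: "G \<subseteq> \<Union>C"
        proof -
          obtain X where "X \<in> C" using False by auto
          then have "G \<subseteq> X" using CA unfolding A_def by auto
          then show ?thesis using \<open>X \<in> C\<close> by auto
        qed
        have 2: "\<Union>C \<subseteq> S" using CA unfolding A_def by auto
        have 3: "\<forall>a\<in>\<Union>C. \<forall>b\<in>S. leq a b \<longrightarrow> b \<in> \<Union>C"
        proof (intro ballI impI)
          fix a b assume "a \<in> \<Union>C" "b \<in> S" "leq a b"
          then obtain X where "X \<in> C" "a \<in> X" by auto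
          then have "b \<in> X" using CA \<open>b \<in> S\<close> \<open>leq a b\<close> unfolding A_def by auto
          then show "b \<in> \<Union>C" using \<open>X \<in> C\<close> by auto
        qed
        have 4: "\<forall>a\<in>\<Union>C. \<forall>b\<in>\<Union>C. mt a b \<in> \<Union>C"
        proof (intro ballI)
          fix a b assume "a \<in> \<Union>C" "b \<in> \<Union>C"
          then obtain X Y where XY: "X \<in> C" "a \<in> X" "Y \<in> C" "b \<in> Y" by auto
          show "mt a b \<in> \<Union>C"
          proof (cases "X \<subseteq> Y")
            case True
            then have "mt a b \<in> Y" using XY CA unfolding A_def by auto
            then show ?thesis using XY by auto
          next
            case False
            then have "Y \<subseteq> X" using ch XY by auto
            then have "mt a b \<in> X" using XY CA unfolding A_def by auto
            then show ?thesis using XY by auto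
          qed
        qed
        have 5: "\<Union>C \<inter> J = {}" using CA unfolding A_def by auto
        show ?thesis unfolding A_def using 1 2 3 4 5 by auto
      qed
      then show ?thesis by auto
    qed
  qed
  from Zorn_Lemma2[OF this] obtain P where P: "P \<in> A" and Pmax: "\<And>X. X \<in> A \<Longrightarrow> P \<subseteq> X \<Longrightarrow> X = P"
    by blast
  have GP: "G \<subseteq> P" and PS: "P \<subseteq> S" and Pup: "\<And>a b. a \<in> P \<Longrightarrow> b \<in> S \<Longrightarrow> leq a b \<Longrightarrow> b \<in> P"
    and Pm: "\<And>a b. a \<in> P \<Longrightarrow> b \<in> P \<Longrightarrow> mt a b \<in> P" and PJ: "P \<inter> J = {}"
    using P unfolding A_def by auto
  have ext: "\<exists>p\<in>P. mt p a \<in> J" if a: "a \<in> S" "a \<notin> P" for a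
  proof (rule ccontr)
    assume nx: "\<not> (\<exists>p\<in>P. mt p a \<in> J)"
    define Pa where "Pa = {x\<in>S. \<exists>p\<in>P. leq (mt p a) x}"
    have "Pa \<in> A" unfolding A_def
    proof (intro CollectI conjI ballI impI)
      show "G \<subseteq> Pa"
      proof
        fix x assume "x \<in> G"
        then have "x \<in> P" "x \<in> S" using GP PS by auto
        then show "x \<in> Pa" unfolding Pa_def using leq_m1 a(1) by blast
      qed
      show "Pa \<subseteq> S" unfolding Pa_def by auto
      show "b \<in> Pa" if xb: "x \<in> Pa" "b \<in> S" "leq x b" for x b
      proof -
        obtain p where p: "p \<in> P" "leq (mt p a) x" "x \<in> S" using xb unfolding Pa_def by auto
        have "mt p a \<in> S" using p PS a(1) cm by auto
        then have "leq (mt p a) b" using leq_trans p xb by blast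
        then show ?thesis unfolding Pa_def using p xb by auto
      qed
      show "mt x y \<in> Pa" if xy: "x \<in> Pa" "y \<in> Pa" for x y
      proof -
        obtain p1 p2 where p: "p1 \<in> P" "p2 \<in> P" "leq (mt p1 a) x" "leq (mt p2 a) y" "x \<in> S" "y \<in> S"
          using xy unfolding Pa_def by auto
        have S': "p1 \<in> S" "p2 \<in> S" using p PS by auto
        have "mt (mt p1 p2) a = mt (mt p1 a) (mt p2 a)"
          using S' a(1) by (metis massoc mcomm midem cm)
        moreover have "leq (mt (mt p1 a) (mt p2 a)) (mt x y)"
          using leq_mono p S' a(1) cm by auto
        ultimately have "leq (mt (mt p1 p2) a) (mt x y)" by simp
        moreover have "mt p1 p2 \<in> P" using Pm p by auto
        ultimately show ?thesis unfolding Pa_def using p cm by blast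
      qed
      show "Pa \<inter> J = {}"
      proof (rule ccontr)
        assume "Pa \<inter> J \<noteq> {}"
        then obtain x p where "x \<in> J" "x \<in> S" "p \<in> P" "leq (mt p a) x" unfolding Pa_def by auto
        then have "mt p a \<in> J" using Jdown PS a(1) cm by blast
        then show False using nx \<open>p \<in> P\<close> by auto
      qed
    qed
    moreover have "P \<subseteq> Pa" unfolding Pa_def
    proof
      fix x assume "x \<in> P"
      then show "x \<in> {x \<in> S. \<exists>p\<in>P. leq (mt p a) x}" using leq_m1 a(1) PS by blast
    qed
    ultimately have "Pa = P" using Pmax by auto
    moreover have "a \<in> Pa"
    proof -
      have "tp \<in> P" using GP oG by auto
      moreover have "leq (mt tp a) a" using mtp' a(1) leq_refl by auto
      ultimately show ?thesis unfolding Pa_def using a(1) by blast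
    qed
    ultimately show False using a by auto
  qed
  have "pf P" unfolding pf_def
  proof (intro conjI ballI)
    show "P \<subseteq> S" by (rule PS)
    show "tp \<in> P" using GP oG by auto
    show "z \<notin> P" using PJ zJ by auto
    fix a b assume ab: "a \<in> S" "b \<in> S"
    show "mt a b \<in> P \<longleftrightarrow> a \<in> P \<and> b \<in> P"
      using Pup Pm ab leq_m1 leq_m2 by blast
    show "jn a b \<in> P \<longleftrightarrow> a \<in> P \<or> b \<in> P"
    proof
      assume "a \<in> P \<or> b \<in> P"
      moreover have "leq a (jn a b)" "leq b (jn a b)" "jn a b \<in> S" using ab leq_j1 leq_j2 cj by auto
      ultimately show "jn a b \<in> P" using Pup by blast
    next
      assume jab: "jn a b \<in> P"
      show "a \<in> P \<or> b \<in> P"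
      proof (rule ccontr)
        assume "\<not> (a \<in> P \<or> b \<in> P)"
        then obtain p1 p2 where p: "p1 \<in> P" "mt p1 a \<in> J" "p2 \<in> P" "mt p2 b \<in> J"
          using ext ab by blast
        define p where "p = mt p1 p2"
        have pP: "p \<in> P" using Pm p p_def by auto
        have S': "p1 \<in> S" "p2 \<in> S" "p \<in> S" using p pP PS by auto
        have "leq (mt p a) (mt p1 a)" unfolding p_def
          by (rule leq_mono) (use S' ab leq_m1 leq_refl cm in auto)
        then have "mt p a \<in> J" using Jdown p(2) S' ab cm by blast
        moreover have "leq (mt p b) (mt p2 b)" unfolding p_def
          by (rule leq_mono) (use S' ab leq_m2 leq_refl cm in auto)
        then have "mt p b \<in> J" using Jdown p(4) S' ab cm by blast
        ultimately have "jn (mt p a) (mt p b) \<in> J" using Jj by auto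
        moreover have "jn (mt p a) (mt p b) = mt p (jn a b)" using dist S' ab by auto
        moreover have "mt p (jn a b) \<in> P" using Pm pP jab by auto
        ultimately show False using PJ by auto
      qed
    qed
  qed
  then show ?thesis using GP PJ by auto
qed

end

lemma substs_PiE: "\<alpha> \<in> substs n k \<Longrightarrow> i \<in> {1..n} \<Longrightarrow> \<alpha> i \<in> {1..k}"
  unfolding substs_def by auto

lemma cyl_substs: "cyl n \<in> substs n (Suc n)"
  unfolding substs_def cyl_def by auto

lemma tuples_UNIV: "tuples UNIV n = {xs. length xs = n}"
  unfolding tuples_def by auto

lemma length_subst_tuple[simp]: "length (subst_tuple n \<alpha> xs) = n"
  unfolding subst_tuple_def by simp

lemma nth_subst_tuple: "i < n \<Longrightarrow> subst_tuple n \<alpha> xs ! i = xs ! (\<alpha> (Suc i) - 1)"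
  unfolding subst_tuple_def by (simp del: upt_Suc)

lemma subst_tuple_cyl: "length xs = n \<Longrightarrow> subst_tuple n (cyl n) (xs @ [y]) = xs"
  by (rule nth_equalityI) (auto simp: nth_subst_tuple cyl_def nth_append)

lemma set_subst_tuple: "\<alpha> \<in> substs n k \<Longrightarrow> length xs = k \<Longrightarrow> set (subst_tuple n \<alpha> xs) \<subseteq> set xs"
proof
  fix x assume a: "\<alpha> \<in> substs n k" "length xs = k" "x \<in> set (subst_tuple n \<alpha> xs)"
  then obtain i where i: "i < n" "x = xs ! (\<alpha> (Suc i) - 1)" by (auto simp: in_set_conv_nth nth_subst_tuple)
  then have "\<alpha> (Suc i) \<in> {1..k}" using substs_PiE[OF a(1)] by auto
  then show "x \<in> set xs" using i a(2) by auto
qed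

lemma subst_tuple_tuples: "\<alpha> \<in> substs n k \<Longrightarrow> xs \<in> tuples W k \<Longrightarrow> subst_tuple n \<alpha> xs \<in> tuples W n"
  using set_subst_tuple unfolding tuples_def by fastforce

locale ctx =
  fixes L :: "'a pe_alg" and W :: "'w set" and \<phi> :: "nat \<Rightarrow> 'a \<Rightarrow> 'w list set"
  assumes pe: "pe_algebra L" and am: "almost_morphism L W \<phi>"
begin

lemma closed: "pe_closed L" using pe unfolding pe_algebra_def by auto

lemma zr_car[simp]: "zr L n \<in> car L n" and on_car[simp]: "on L n \<in> car L n"
  using closed unfolding pe_closed_def by auto

lemma mt_car[simp]: "x \<in> car L n \<Longrightarrow> y \<in> car L n \<Longrightarrow> mt L n x y \<in> car L n"
  and jn_car[simp]: "x \<in> car L n \<Longrightarrow> y \<in> car L n \<Longrightarrow> jn L n x y \<in> car L n"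
  using closed unfolding pe_closed_def by auto

lemma sb_car[simp]: "\<alpha> \<in> substs n k \<Longrightarrow> x \<in> car L n \<Longrightarrow> sb L n k \<alpha> x \<in> car L k"
  using closed unfolding pe_closed_def by auto

lemma ex_car[simp]: "x \<in> car L (Suc n) \<Longrightarrow> ex L n x \<in> car L n"
  using closed unfolding pe_closed_def by auto

lemma dlL: "dl (car L n) (mt L n) (jn L n) (zr L n) (on L n)"
proof -
  have A1: "ax1 L" using pe unfolding pe_algebra_def by auto
  then have A: "\<forall>x\<in>car L n. \<forall>y\<in>car L n. \<forall>z\<in>car L n.
      jn L n (jn L n x y) z = jn L n x (jn L n y z) \<and>
      mt L n (mt L n x y) z = mt L n x (mt L n y z) \<and>
      jn L n x y = jn L n y x \<and>
      mt L n x y = mt L n y x \<and>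
      jn L n x (mt L n x y) = x \<and>
      mt L n x (jn L n x y) = x \<and>
      mt L n x (jn L n y z) = jn L n (mt L n x y) (mt L n x z) \<and>
      jn L n x (zr L n) = x \<and>
      mt L n x (on L n) = x" unfolding ax1_def by (rule spec)
  have z: "zr L n \<in> car L n" by simp
  show ?thesis
  proof
    fix x y w assume xyw: "x \<in> car L n" "y \<in> car L n" "w \<in> car L n"
    note B = A[rule_format, OF xyw]
    show "jn L n (jn L n x y) w = jn L n x (jn L n y w)" using B by (rule conjunct1)
    show "mt L n (mt L n x y) w = mt L n x (mt L n y w)" using B by blast
    show "mt L n x (jn L n y w) = jn L n (mt L n x y) (mt L n x w)" using B by blast
  next
    fix x y assume xy: "x \<in> car L n" "y \<in> car L n"
    note B = A[rule_format, OF xy z]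
    show "jn L n x y = jn L n y x" using B by blast
    show "mt L n x y = mt L n y x" using B by blast
    show "jn L n x (mt L n x y) = x" using B by blast
    show "mt L n x (jn L n x y) = x" using B by blast
    show "jn L n x y \<in> car L n" using xy by simp
    show "mt L n x y \<in> car L n" using xy by simp
  next
    fix x assume x: "x \<in> car L n"
    note B = A[rule_format, OF x z z]
    show "jn L n x (zr L n) = x" using B by blast
    show "mt L n x (on L n) = x" using B by blast
  qed simp_all
qed

lemma leq_eq: "dl.leq (mt L n) = le L n"
  by (rule ext)+ (simp add: dl.leq_def[OF dlL] le_def)

abbreviation PF where "PF n P \<equiv> dl.pf (car L n) (mt L n) (jn L n) (zr L n) (on L n) P"

lemma sb_ops:
  assumes "\<alpha> \<in> substs n k"
  shows "sb L n k \<alpha> (zr L n) = zr L k" "sb L n k \<alpha> (on L n) = on L k"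
    "x \<in> car L n \<Longrightarrow> y \<in> car L n \<Longrightarrow> sb L n k \<alpha> (jn L n x y) = jn L k (sb L n k \<alpha> x) (sb L n k \<alpha> y)"
    "x \<in> car L n \<Longrightarrow> y \<in> car L n \<Longrightarrow> sb L n k \<alpha> (mt L n x y) = mt L k (sb L n k \<alpha> x) (sb L n k \<alpha> y)"
  using pe assms unfolding pe_algebra_def ax2_def by auto

lemma sb_comp:
  "\<alpha> \<in> substs k n \<Longrightarrow> \<beta> \<in> substs n m \<Longrightarrow> r \<in> car L k \<Longrightarrow>
   sb L k m (compose {1..k} \<beta> \<alpha>) r = sb L n m \<beta> (sb L k n \<alpha> r)"
  using pe unfolding pe_algebra_def ax3_def by auto

lemma ex_ops: "ex L n (zr L (Suc n)) = zr L n"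
  "r \<in> car L (Suc n) \<Longrightarrow> s \<in> car L (Suc n) \<Longrightarrow> ex L n (jn L (Suc n) r s) = jn L n (ex L n r) (ex L n s)"
  using pe unfolding pe_algebra_def ax7_def by auto

lemma ax8': "r \<in> car L (Suc n) \<Longrightarrow> le L (Suc n) r (sb L n (Suc n) (cyl n) (ex L n r))"
  using pe unfolding pe_algebra_def ax8_def by auto

lemma frob: "r \<in> car L (Suc n) \<Longrightarrow> s \<in> car L n \<Longrightarrow>
   ex L n (mt L (Suc n) r (sb L n (Suc n) (cyl n) s)) = mt L n (ex L n r) s"
  using pe unfolding pe_algebra_def ax9_def by auto

definition ext :: "(nat \<Rightarrow> nat) \<Rightarrow> nat \<Rightarrow> nat \<Rightarrow> nat \<Rightarrow> nat" where
  "ext \<sigma> k j = restrict (\<lambda>i. if i \<le> k then \<sigma> i else Suc j) {1..Suc k}"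

lemma ext_substs: "\<sigma> \<in> substs k j \<Longrightarrow> ext \<sigma> k j \<in> substs (Suc k) (Suc j)"
  unfolding substs_def ext_def by (auto simp: PiE_def Pi_def)

lemma bigmeet1: "x \<in> car L m \<Longrightarrow> bigmeet L m [x] = x"
  unfolding bigmeet_def using dl.mtp[OF dlL] by simp

lemma BC:
  assumes s: "\<sigma> \<in> substs k j" and r: "r \<in> car L (Suc k)"
  shows "ex L j (sb L (Suc k) (Suc j) (ext \<sigma> k j) r) = sb L k j \<sigma> (ex L k r)"
proof -
  have a10: "ax10 L" using pe unfolding pe_algebra_def by auto
  have c: "\<forall>i\<in>{1..1::nat}. (\<lambda>_. \<sigma>) i \<in> substs ((\<lambda>_. k) i) j \<and>
       (\<lambda>_. ext \<sigma> k j) i \<in> substs (Suc ((\<lambda>_. k) i)) (j + 1) \<and>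
       (\<forall>jj\<in>{1..(\<lambda>_. k) i}. (\<lambda>_. ext \<sigma> k j) i jj = (\<lambda>_. \<sigma>) i jj) \<and>
       (\<lambda>_. ext \<sigma> k j) i (Suc ((\<lambda>_. k) i)) = j + i \<and> (\<lambda>_. r) i \<in> car L (Suc ((\<lambda>_. k) i))"
    using s r ext_substs[OF s] by (auto simp: ext_def)
  have "exn L j 1 (bigmeet L (j + 1) (map (\<lambda>i. sb L (Suc ((\<lambda>_. k) i)) (j + 1) ((\<lambda>_. ext \<sigma> k j) i) ((\<lambda>_. r) i)) [1..<Suc 1]))
          = bigmeet L j (map (\<lambda>i. sb L ((\<lambda>_. k) i) j ((\<lambda>_. \<sigma>) i) (ex L ((\<lambda>_. k) i) ((\<lambda>_. r) i))) [1..<Suc 1])"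
    using a10[unfolded ax10_def, THEN spec[of _ 1], THEN spec[of _ j], THEN spec[of _ "\<lambda>_. k"],
       THEN spec[of _ "\<lambda>_. \<sigma>"], THEN spec[of _ "\<lambda>_. ext \<sigma> k j"], THEN spec[of _ "\<lambda>_. r"]] c
    by (rule mp)
  then show ?thesis using bigmeet1 sb_car ext_substs[OF s] s r ex_car by simp
qed

lemma leqI: "le L n x y \<Longrightarrow> dl.leq (mt L n) x y" by (simp add: leq_eq)

lemma ex_mono: "x \<in> car L (Suc n) \<Longrightarrow> y \<in> car L (Suc n) \<Longrightarrow> le L (Suc n) x y \<Longrightarrow> le L n (ex L n x) (ex L n y)"
proof -
  assume a: "x \<in> car L (Suc n)" "y \<in> car L (Suc n)" "le L (Suc n) x y"
  have "jn L (Suc n) x y = y" using dl.leq_jn_eq[OF dlL a(1,2)] a(3) by (simp add: leq_eq)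
  then have "jn L n (ex L n x) (ex L n y) = ex L n y" using ex_ops(2)[OF a(1,2)] by simp
  then show ?thesis using dl.jn_eq_leq[OF dlL] a by (simp add: leq_eq)
qed

lemma ex_cyl_le: "b \<in> car L n \<Longrightarrow> le L n (ex L n (sb L n (Suc n) (cyl n) b)) b"
proof -
  assume b: "b \<in> car L n"
  have cb: "sb L n (Suc n) (cyl n) b \<in> car L (Suc n)" using b cyl_substs by simp
  have "ex L n (mt L (Suc n) (on L (Suc n)) (sb L n (Suc n) (cyl n) b)) = mt L n (ex L n (on L (Suc n))) b"
    using frob b by simp
  moreover have "mt L (Suc n) (on L (Suc n)) (sb L n (Suc n) (cyl n) b) = sb L n (Suc n) (cyl n) b"
    using dl.mtp'[OF dlL cb] .
  ultimately show ?thesis using dl.leq_m2[OF dlL[of n], of "ex L n (on L (Suc n))" b] b by (simp add: leq_eq)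
qed

lemma step:
  assumes P: "PF j P" and s: "s \<in> car L (Suc j)" and es: "ex L j s \<in> P"
  shows "\<exists>Q. PF (Suc j) Q \<and> (\<forall>a\<in>car L j. a \<in> P \<longleftrightarrow> sb L j (Suc j) (cyl j) a \<in> Q) \<and> s \<in> Q"
proof -
  interpret D1: dl "car L (Suc j)" "mt L (Suc j)" "jn L (Suc j)" "zr L (Suc j)" "on L (Suc j)" by (rule dlL)
  interpret D0: dl "car L j" "mt L j" "jn L j" "zr L j" "on L j" by (rule dlL)
  define c where "c = sb L j (Suc j) (cyl j)"
  have cc: "a \<in> car L j \<Longrightarrow> c a \<in> car L (Suc j)" for a unfolding c_def using cyl_substs by simp
  have cops: "c (on L j) = on L (Suc j)" "c (zr L j) = zr L (Suc j)"
    "a \<in> car L j \<Longrightarrow> b \<in> car L j \<Longrightarrow> c (mt L j a b) = mt L (Suc j) (c a) (c b)"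
    "a \<in> car L j \<Longrightarrow> b \<in> car L j \<Longrightarrow> c (jn L j a b) = jn L (Suc j) (c a) (c b)"
    for a b unfolding c_def using sb_ops[OF cyl_substs] by auto
  have PS: "P \<subseteq> car L j" and Pon: "on L j \<in> P" and Pzr: "zr L j \<notin> P"
    and Pm: "\<And>a b. a \<in> car L j \<Longrightarrow> b \<in> car L j \<Longrightarrow> mt L j a b \<in> P \<longleftrightarrow> a \<in> P \<and> b \<in> P"
    and Pj: "\<And>a b. a \<in> car L j \<Longrightarrow> b \<in> car L j \<Longrightarrow> jn L j a b \<in> P \<longleftrightarrow> a \<in> P \<or> b \<in> P"
    using P unfolding D0.pf_def by auto
  define G where "G = {x \<in> car L (Suc j). \<exists>a\<in>P. D1.leq (mt L (Suc j) s (c a)) x}"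
  define J where "J = {x \<in> car L (Suc j). \<exists>b\<in>car L j. b \<notin> P \<and> D1.leq x (c b)}"
  have sG: "s \<in> G"
  proof -
    have "mt L (Suc j) s (c (on L j)) = s" using cops(1) D1.mtp s by simp
    then show ?thesis unfolding G_def using s Pon D1.leq_refl[OF s] by force
  qed
  have cG: "a \<in> P \<Longrightarrow> c a \<in> G" for a
    unfolding G_def using PS cc D1.leq_m2 s by blast
  have cJ: "a \<in> car L j \<Longrightarrow> a \<notin> P \<Longrightarrow> c a \<in> J" for a
    unfolding J_def using cc D1.leq_refl by blast
  have "\<exists>Q. D1.pf Q \<and> G \<subseteq> Q \<and> Q \<inter> J = {}"
  proof (rule D1.pft)
    show "G \<subseteq> car L (Suc j)" unfolding G_def by auto
    show "on L (Suc j) \<in> G"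
    proof -
      have "D1.leq (mt L (Suc j) s (c (on L j))) (on L (Suc j))" using cops(1) s D1.leq_tp D1.mtp by simp
      then show ?thesis unfolding G_def using Pon by force
    qed
    show "b \<in> G" if asm: "a \<in> G" "b \<in> car L (Suc j)" "D1.leq a b" for a b
    proof -
      obtain x where x: "x \<in> P" "D1.leq (mt L (Suc j) s (c x)) a" "a \<in> car L (Suc j)" using asm G_def by auto
      have "mt L (Suc j) s (c x) \<in> car L (Suc j)" using s cc x PS by auto
      then have "D1.leq (mt L (Suc j) s (c x)) b" using D1.leq_trans x that by blast
      then show ?thesis unfolding G_def using x that by auto
    qed
    show "mt L (Suc j) a b \<in> G" if asm: "a \<in> G" "b \<in> G" for a b
    proof -
      obtain x y where xy: "x \<in> P" "D1.leq (mt L (Suc j) s (c x)) a" "a \<in> car L (Suc j)"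
         "y \<in> P" "D1.leq (mt L (Suc j) s (c y)) b" "b \<in> car L (Suc j)" using asm G_def by auto
      have S: "x \<in> car L j" "y \<in> car L j" "c x \<in> car L (Suc j)" "c y \<in> car L (Suc j)" using xy PS cc by auto
      have "mt L (Suc j) s (c (mt L j x y)) = mt L (Suc j) (mt L (Suc j) s (c x)) (mt L (Suc j) s (c y))"
        using cops(3)[OF S(1,2)] D1.mt_self_distrib[OF s S(3,4)] by simp
      moreover have "D1.leq (mt L (Suc j) (mt L (Suc j) s (c x)) (mt L (Suc j) s (c y))) (mt L (Suc j) a b)"
        using D1.leq_mono xy S s by simp
      ultimately have "D1.leq (mt L (Suc j) s (c (mt L j x y))) (mt L (Suc j) a b)" by simp
      moreover have "mt L j x y \<in> P" using Pm S xy by auto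
      moreover have "mt L (Suc j) a b \<in> car L (Suc j)" using xy by simp
      ultimately show ?thesis unfolding G_def by blast
    qed
    show "J \<subseteq> car L (Suc j)" unfolding J_def by auto
    show "zr L (Suc j) \<in> J" unfolding J_def using Pzr cops(2) D1.leq_refl by auto
    show "a \<in> J" if asm: "b \<in> J" "a \<in> car L (Suc j)" "D1.leq a b" for a b
    proof -
      obtain x where x: "x \<in> car L j" "x \<notin> P" "D1.leq b (c x)" "b \<in> car L (Suc j)" using asm J_def by auto
      then have "D1.leq a (c x)" using D1.leq_trans that cc by blast
      then show ?thesis unfolding J_def using x that by auto
    qed
    show "jn L (Suc j) a b \<in> J" if asm: "a \<in> J" "b \<in> J" for a b
    proof -
      obtain x y where xy: "x \<in> car L j" "x \<notin> P" "D1.leq a (c x)" "a \<in> car L (Suc j)"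
         "y \<in> car L j" "y \<notin> P" "D1.leq b (c y)" "b \<in> car L (Suc j)" using asm J_def by auto
      have S: "c x \<in> car L (Suc j)" "c y \<in> car L (Suc j)" using xy cc by auto
      have j: "c (jn L j x y) = jn L (Suc j) (c x) (c y)" using cops(4) xy by auto
      have "D1.leq a (jn L (Suc j) (c x) (c y))" using D1.leq_trans[OF xy(4) S(1)] xy(3) D1.leq_j1 S D1.cj by blast
      moreover have "D1.leq b (jn L (Suc j) (c x) (c y))" using D1.leq_trans[OF xy(8) S(2)] xy(7) D1.leq_j2 S D1.cj by blast
      ultimately have "D1.leq (jn L (Suc j) a b) (c (jn L j x y))" using D1.leq_lub xy S D1.cj j by simp
      moreover have "jn L j x y \<notin> P" using Pj xy by auto
      ultimately show ?thesis unfolding J_def using xy by auto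
    qed
    show "G \<inter> J = {}"
    proof (rule ccontr)
      assume "G \<inter> J \<noteq> {}"
      then obtain x a b where x: "x \<in> car L (Suc j)" "a \<in> P" "D1.leq (mt L (Suc j) s (c a)) x"
        "b \<in> car L j" "b \<notin> P" "D1.leq x (c b)" unfolding G_def J_def by auto
      have aS: "a \<in> car L j" using x PS by auto
      have m: "mt L (Suc j) s (c a) \<in> car L (Suc j)" using s cc aS by auto
      have "D1.leq (mt L (Suc j) s (c a)) (c b)" using D1.leq_trans[OF m x(1) cc[OF x(4)]] x by blast
      then have l1: "D0.leq (ex L j (mt L (Suc j) s (c a))) (ex L j (c b))"
        using ex_mono m cc[OF x(4)] by (simp add: leq_eq)
      have l2: "D0.leq (ex L j (c b)) b" using ex_cyl_le[OF x(4)] unfolding c_def by (simp add: leq_eq)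
      have eq: "ex L j (mt L (Suc j) s (c a)) = mt L j (ex L j s) a" unfolding c_def using frob s aS by simp
      have cs: "mt L j (ex L j s) a \<in> car L j" "ex L j (c b) \<in> car L j" using s aS cc[OF x(4)] by auto
      have "D0.leq (mt L j (ex L j s) a) b" using D0.leq_trans[OF cs x(4)] l1 l2 eq by simp
      moreover have "mt L j (ex L j s) a \<in> P" using Pm es x(2) aS s by auto
      ultimately have "b \<in> P" using D0.pf_up[OF P] x(4) by blast
      then show False using x by auto
    qed
  qed
  then obtain Q where Q: "D1.pf Q" "G \<subseteq> Q" "Q \<inter> J = {}" by blast
  have "\<forall>a\<in>car L j. a \<in> P \<longleftrightarrow> c a \<in> Q" using cG cJ Q by blast
  then show ?thesis using Q sG unfolding c_def by blast
qed

end

fun enc1 :: "'a \<Rightarrow> 'a \<Rightarrow> 'a list \<Rightarrow> 'a list" where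
  "enc1 e0 e1 [] = [e0]"
| "enc1 e0 e1 (x # xs) = e1 # x # enc1 e0 e1 xs"

fun encL :: "'a \<Rightarrow> 'a \<Rightarrow> 'a list list \<Rightarrow> 'a list" where
  "encL e0 e1 [] = [e0]"
| "encL e0 e1 (u # us) = e1 # enc1 e0 e1 u @ encL e0 e1 us"

definition hn :: "'a \<Rightarrow> 'a \<Rightarrow> 'a list list \<Rightarrow> 'a \<Rightarrow> 'a list" where
  "hn e0 e1 us r = e0 # r # encL e0 e1 us"

definition bn :: "'a \<Rightarrow> 'a \<Rightarrow> nat \<Rightarrow> 'a \<Rightarrow> 'a \<Rightarrow> nat \<Rightarrow> 'a list" where
  "bn e0 e1 n a a' i = e1 # a # a' # replicate n e1 @ e0 # replicate i e1"

lemma enc1_inj: "e0 \<noteq> e1 \<Longrightarrow> enc1 e0 e1 u @ xs = enc1 e0 e1 u' @ xs' \<Longrightarrow> u = u' \<and> xs = xs'"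
proof (induction u arbitrary: u')
  case Nil
  then show ?case by (cases u') auto
next
  case (Cons x u)
  then show ?case by (cases u') auto
qed

lemma encL_inj: "e0 \<noteq> e1 \<Longrightarrow> encL e0 e1 us = encL e0 e1 us' \<Longrightarrow> us = us'"
proof (induction us arbitrary: us')
  case Nil
  then show ?case by (cases us') auto
next
  case (Cons u us)
  then show ?case
  proof (cases us')
    case Nil then show ?thesis using Cons by auto
  next
    case (Cons u' us'')
    then have "enc1 e0 e1 u @ encL e0 e1 us = enc1 e0 e1 u' @ encL e0 e1 us''"
      using Cons.prems by simp
    then show ?thesis using enc1_inj[OF Cons.prems(1)] Cons.IH[OF Cons.prems(1)] Cons by blast
  qed
qed

lemma hn_inj: "e0 \<noteq> e1 \<Longrightarrow> hn e0 e1 us r = hn e0 e1 us' r' \<Longrightarrow> us = us' \<and> r = r'"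
  unfolding hn_def using encL_inj by fastforce

lemma enc1_len: "length u < length (enc1 e0 e1 u)"
  by (induction u) auto

lemma encL_len: "u \<in> set us \<Longrightarrow> length u < length (encL e0 e1 us)"
proof (induction us)
  case Nil then show ?case by simp
next
  case (Cons v us)
  then show ?case using enc1_len[of v e0 e1] by auto
qed

lemma hn_len: "u \<in> set us \<Longrightarrow> length u < length (hn e0 e1 us r)"
  unfolding hn_def using encL_len[of u us e0 e1] by simp

lemma rep_inj: "x \<noteq> y \<Longrightarrow> replicate n x @ y # xs = replicate m x @ y # ys \<Longrightarrow> n = m \<and> xs = ys"
proof (induction n arbitrary: m)
  case 0 then show ?case by (cases m) auto
next
  case (Suc n) then show ?case by (cases m) auto
qed

lemma bn_inj: "e0 \<noteq> e1 \<Longrightarrow> bn e0 e1 n a a' i = bn e0 e1 m b b' j \<Longrightarrow> n = m \<and> a = b \<and> a' = b' \<and> i = j"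
  unfolding bn_def using rep_inj[of e1 e0 n "replicate i e1" m "replicate j e1"] by auto

lemma hn_bn: "e0 \<noteq> e1 \<Longrightarrow> hn e0 e1 us r \<noteq> bn e0 e1 n a a' i"
  unfolding hn_def bn_def by auto


context ctx begin

lemma hb: "hom_base L W \<phi>" using am unfolding almost_morphism_def by auto

lemma phi_car: "a \<in> car L n \<Longrightarrow> \<phi> n a \<subseteq> tuples W n"
  using hb unfolding hom_base_def A_def by auto

lemma phi_sb: "\<alpha> \<in> substs n k \<Longrightarrow> a \<in> car L n \<Longrightarrow> \<phi> k (sb L n k \<alpha> a) = {xs \<in> tuples W k. subst_tuple n \<alpha> xs \<in> \<phi> n a}"
  using hb unfolding hom_base_def A_def by auto

lemma phi_zr: "\<phi> n (zr L n) = {}" and phi_on: "\<phi> n (on L n) = tuples W n"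
  using hb unfolding hom_base_def A_def by auto

lemma phi_jn: "a \<in> car L n \<Longrightarrow> b \<in> car L n \<Longrightarrow> \<phi> n (jn L n a b) = \<phi> n a \<union> \<phi> n b"
  and phi_mt: "a \<in> car L n \<Longrightarrow> b \<in> car L n \<Longrightarrow> \<phi> n (mt L n a b) = \<phi> n a \<inter> \<phi> n b"
  using hb unfolding hom_base_def A_def by auto

lemma phi_ex: "r \<in> car L (Suc n) \<Longrightarrow> {xs \<in> tuples W n. \<exists>y\<in>W. xs @ [y] \<in> \<phi> (Suc n) r} \<subseteq> \<phi> n (ex L n r)"
  using am unfolding almost_morphism_def A_def by auto

lemma e01: "zr L 0 \<noteq> on L 0"
proof
  assume "zr L 0 = on L 0"
  then have "\<phi> 0 (zr L 0) = \<phi> 0 (on L 0)" by simp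
  then show False using phi_zr phi_on unfolding tuples_def by auto
qed

lemma phi_type_pf: "xs \<in> tuples W n \<Longrightarrow> PF n {a \<in> car L n. xs \<in> \<phi> n a}"
  unfolding dl.pf_def[OF dlL] using phi_zr phi_on phi_jn phi_mt by auto

end

locale ctx2 = ctx +
  assumes ne: "[] \<in> \<phi> 0 (ex L 0 (on L 1))"
begin

abbreviation "e0 \<equiv> zr L 0"
abbreviation "e1 \<equiv> on L 0"

definition "D = {(n,a,a'). a \<in> car L n \<and> a' \<in> car L n \<and> \<phi> n a \<noteq> \<phi> n a'}"
definition "wit d = (case d of (n,a,a') \<Rightarrow> (SOME w. w \<in> tuples W n \<and> (w \<in> \<phi> n a \<longleftrightarrow> w \<notin> \<phi> n a')))"
definition "bnf q = (case q of (n,a,a',i) \<Rightarrow> bn e0 e1 n a a' i)"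
definition "Bidx = {(n,a,a',i). (n,a,a') \<in> D \<and> i < n}"
definition "B = bnf ` Bidx"
definition "g x = (case the_inv bnf x of (n,a,a',i) \<Rightarrow> wit (n,a,a') ! i)"
definition "bt n a a' = map (bn e0 e1 n a a') [0..<n]"

lemma wit: "(n,a,a') \<in> D \<Longrightarrow> wit (n,a,a') \<in> tuples W n \<and> (wit (n,a,a') \<in> \<phi> n a \<longleftrightarrow> wit (n,a,a') \<notin> \<phi> n a')"
proof -
  assume d: "(n,a,a') \<in> D"
  then have "\<exists>w. w \<in> tuples W n \<and> (w \<in> \<phi> n a \<longleftrightarrow> w \<notin> \<phi> n a')"
    unfolding D_def using phi_car by blast
  then show ?thesis unfolding wit_def by (simp, rule someI_ex)
qed

lemma bnf_inj: "inj bnf"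
proof (rule injI)
  fix x y assume "bnf x = bnf y"
  then show "x = y" unfolding bnf_def using bn_inj[OF e01]
    by (cases x; cases y) fastforce
qed

lemma g_bn: "g (bn e0 e1 n a a' i) = wit (n,a,a') ! i"
proof -
  have "bn e0 e1 n a a' i = bnf (n,a,a',i)" unfolding bnf_def by simp
  then show ?thesis unfolding g_def using the_inv_f_f[OF bnf_inj] by simp
qed

lemma g_B: "x \<in> B \<Longrightarrow> g x \<in> W"
proof -
  assume "x \<in> B"
  then obtain n a a' i where q: "(n,a,a') \<in> D" "i < n" "x = bn e0 e1 n a a' i"
    unfolding B_def Bidx_def bnf_def by auto
  then show ?thesis using g_bn wit[OF q(1)] unfolding tuples_def by (auto simp: subset_iff)
qed

lemma bt_B: "(n,a,a') \<in> D \<Longrightarrow> set (bt n a a') \<subseteq> B"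
proof
  fix x assume d: "(n,a,a') \<in> D" and "x \<in> set (bt n a a')"
  then obtain i where i: "i < n" "x = bn e0 e1 n a a' i" unfolding bt_def by auto
  then have "x = bnf (n,a,a',i)" "(n,a,a',i) \<in> Bidx" unfolding bnf_def Bidx_def using d by auto
  then show "x \<in> B" unfolding B_def by blast
qed

lemma map_g_bt: "(n,a,a') \<in> D \<Longrightarrow> map g (bt n a a') = wit (n,a,a')"
  using wit unfolding bt_def tuples_def by (intro nth_equalityI) (auto simp: g_bn)

lemma hn_notB: "hn e0 e1 us r \<notin> B"
  unfolding B_def bnf_def using hn_bn[OF e01] by auto

end


locale ctx3 = ctx2 +
  fixes N :: "'a list set"
  assumes finN: "finite N"
begin

definition "bs = (SOME xs. distinct xs \<and> set xs = N \<inter> B)"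
definition "ns = sort_key length (SOME xs. distinct xs \<and> set xs = N - B)"
definition "zs = bs @ ns"
definition "p = length bs"
definition "M = length zs"
definition "idx x = (LEAST i. zs ! i = x)"
definition "sg us = restrict (\<lambda>i. Suc (idx (us ! (i - 1)))) {1..length us}"
definition "P0 = {a \<in> car L p. map g bs \<in> \<phi> p a}"
definition "hinv c = (SOME q. c = hn e0 e1 (fst q) (snd q))"
definition "sreq k P = (let c = zs ! (p + k); us = fst (hinv c); r = snd (hinv c); n = length us in
    if (\<exists>q. c = hn e0 e1 (fst q) (snd q)) \<and> r \<in> car L (Suc n) \<and> (\<forall>x\<in>set us. x \<in> set zs \<and> idx x < p + k)
       \<and> sb L n (p + k) (sg us) (ex L n r) \<in> P
    then sb L (Suc n) (Suc (p + k)) (ext (sg us) n (p + k)) r else on L (Suc (p + k)))"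

primrec Ps :: "nat \<Rightarrow> 'a set" where
  "Ps 0 = P0"
| "Ps (Suc k) = (SOME Q. PF (Suc (p + k)) Q \<and> (\<forall>a\<in>car L (p + k). a \<in> Ps k \<longleftrightarrow> sb L (p + k) (Suc (p + k)) (cyl (p + k)) a \<in> Q)
     \<and> sreq k (Ps k) \<in> Q)"

definition "T x = (sb L (length (fst x)) (Suc M) (sg (fst x)) (snd x) \<in> Ps (Suc M - p))"

lemma bs_prop: "distinct bs \<and> set bs = N \<inter> B"
proof -
  have "finite (N \<inter> B)" using finN by auto
  then have "\<exists>xs. distinct xs \<and> set xs = N \<inter> B" using finite_distinct_list by blast
  then show ?thesis unfolding bs_def by (rule someI_ex)
qed

lemma ns_prop: "distinct ns \<and> set ns = N - B \<and> sorted (map length ns)"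
proof -
  have "finite (N - B)" using finN by auto
  then have "\<exists>xs. distinct xs \<and> set xs = N - B" using finite_distinct_list by blast
  then have "distinct (SOME xs. distinct xs \<and> set xs = N - B) \<and> set (SOME xs. distinct xs \<and> set xs = N - B) = N - B"
    by (rule someI_ex)
  then show ?thesis unfolding ns_def by simp
qed

lemma zs_distinct: "distinct zs" and set_zs: "set zs = N"
  using bs_prop ns_prop unfolding zs_def by auto

lemma pM: "p \<le> M" unfolding p_def M_def zs_def by simp

lemma idx_nth: "i < M \<Longrightarrow> idx (zs ! i) = i"
  unfolding idx_def M_def
proof (rule Least_equality)
  show "zs ! i = zs ! i" by simp
  fix y assume "i < length zs" "zs ! y = zs ! i"
  then show "i \<le> y"
  proof (cases "y < length zs")
    case True
    then show ?thesis using nth_eq_iff_index_eq[OF zs_distinct True \<open>i < length zs\<close>] \<open>zs ! y = zs ! i\<close> by simp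
  qed simp
qed

lemma idx_in: "x \<in> set zs \<Longrightarrow> idx x < M \<and> zs ! idx x = x"
proof -
  assume "x \<in> set zs"
  then obtain i where "i < M" "zs ! i = x" unfolding M_def by (auto simp: in_set_conv_nth)
  then show ?thesis using idx_nth by auto
qed

lemma idx_bs: "x \<in> set bs \<Longrightarrow> idx x < p"
proof -
  assume "x \<in> set bs"
  then obtain i where i: "i < p" "bs ! i = x" unfolding p_def by (auto simp: in_set_conv_nth)
  then have "zs ! i = x" "i < M" unfolding zs_def M_def p_def by (auto simp: nth_append)
  then show ?thesis using idx_nth i by auto
qed

lemma idx_ns: "i < length ns \<Longrightarrow> idx (ns ! i) = p + i \<and> zs ! (p + i) = ns ! i"
proof -
  assume "i < length ns"
  then have "zs ! (p + i) = ns ! i" "p + i < M" unfolding zs_def M_def p_def by (auto simp: nth_append)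
  then show ?thesis using idx_nth by metis
qed

lemma sg_substs: "(\<forall>x\<in>set us. idx x < j) \<Longrightarrow> sg us \<in> substs (length us) j"
proof -
  assume h: "\<forall>x\<in>set us. idx x < j"
  have "Suc (idx (us ! (i - 1))) \<in> {1..j}" if "i \<in> {1..length us}" for i
  proof -
    have "us ! (i - 1) \<in> set us" using that by auto
    then show ?thesis using h by auto
  qed
  then show ?thesis unfolding substs_def sg_def by (auto simp: PiE_def Pi_def)
qed

lemma incl_substs: "j \<le> j' \<Longrightarrow> restrict id {1..j} \<in> substs j j'"
  unfolding substs_def by (auto simp: PiE_def Pi_def)

lemma P0_pf: "PF p P0"
proof -
  have "map g bs \<in> tuples W p" using bs_prop g_B unfolding tuples_def p_def by auto
  then show ?thesis unfolding P0_def using phi_type_pf by simp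
qed

lemma P0_ex: "ex L p (on L (Suc p)) \<in> P0"
proof (cases "p = 0")
  case True
  then have "bs = []" unfolding p_def by simp
  then show ?thesis using ne True unfolding P0_def by simp
next
  case False
  then obtain x where "x \<in> set bs" unfolding p_def by (cases bs) auto
  then have "g x \<in> W" using bs_prop g_B by auto
  moreover have gt: "map g bs \<in> tuples W p" using bs_prop g_B unfolding tuples_def p_def by auto
  ultimately have "map g bs @ [g x] \<in> \<phi> (Suc p) (on L (Suc p))" using phi_on unfolding tuples_def by auto
  then have "map g bs \<in> \<phi> p (ex L p (on L (Suc p)))" using phi_ex[of "on L (Suc p)" p] gt \<open>g x \<in> W\<close> by auto
  then show ?thesis unfolding P0_def by simp
qed

lemma sreq_ok: "PF (p + k) P \<Longrightarrow> ex L (p + k) (on L (Suc (p + k))) \<in> P \<Longrightarrow>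
   sreq k P \<in> car L (Suc (p + k)) \<and> ex L (p + k) (sreq k P) \<in> P"
proof -
  assume P: "PF (p + k) P" and eo: "ex L (p + k) (on L (Suc (p + k))) \<in> P"
  define c where "c = zs ! (p + k)"
  define us where "us = fst (hinv c)"
  define r where "r = snd (hinv c)"
  define n where "n = length us"
  show ?thesis
  proof (cases "(\<exists>q. c = hn e0 e1 (fst q) (snd q)) \<and> r \<in> car L (Suc n) \<and> (\<forall>x\<in>set us. x \<in> set zs \<and> idx x < p + k)
       \<and> sb L n (p + k) (sg us) (ex L n r) \<in> P")
    case True
    then have s: "sg us \<in> substs n (p + k)" using sg_substs n_def by auto
    have "sreq k P = sb L (Suc n) (Suc (p + k)) (ext (sg us) n (p + k)) r"
      using True unfolding sreq_def Let_def c_def us_def r_def n_def by simp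
    then show ?thesis using BC[OF s] True ext_substs[OF s] by simp
  next
    case False
    have "sreq k P = on L (Suc (p + k))"
      using False unfolding sreq_def Let_def c_def us_def r_def n_def by auto
    then show ?thesis using eo by simp
  qed
qed

lemma Ps_inv: "PF (p + k) (Ps k) \<and> ex L (p + k) (on L (Suc (p + k))) \<in> Ps k"
proof (induction k)
  case 0
  then show ?case using P0_pf P0_ex by simp
next
  case (Suc k)
  have ok: "sreq k (Ps k) \<in> car L (Suc (p + k))" "ex L (p + k) (sreq k (Ps k)) \<in> Ps k"
    using sreq_ok Suc.IH by auto
  have ex: "\<exists>Q. PF (Suc (p + k)) Q \<and> (\<forall>a\<in>car L (p + k). a \<in> Ps k \<longleftrightarrow> sb L (p + k) (Suc (p + k)) (cyl (p + k)) a \<in> Q)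
     \<and> sreq k (Ps k) \<in> Q" using step[OF _ ok] Suc.IH by blast
  have "PF (Suc (p + k)) (Ps (Suc k)) \<and> (\<forall>a\<in>car L (p + k). a \<in> Ps k \<longleftrightarrow> sb L (p + k) (Suc (p + k)) (cyl (p + k)) a \<in> Ps (Suc k))
     \<and> sreq k (Ps k) \<in> Ps (Suc k)"
    unfolding Ps.simps(2) by (rule someI_ex[OF ex])
  then have Q: "PF (Suc (p + k)) (Ps (Suc k))" "\<forall>a\<in>car L (p + k). a \<in> Ps k \<longleftrightarrow> sb L (p + k) (Suc (p + k)) (cyl (p + k)) a \<in> Ps (Suc k)"
    by blast+
  have cs: "cyl (p + k) \<in> substs (p + k) (Suc (p + k))" by (rule cyl_substs)
  have "ex L (Suc (p + k)) (sb L (Suc (p + k)) (Suc (Suc (p + k))) (ext (cyl (p + k)) (p + k) (Suc (p + k))) (on L (Suc (p + k))))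
     = sb L (p + k) (Suc (p + k)) (cyl (p + k)) (ex L (p + k) (on L (Suc (p + k))))"
    using BC[OF cs] by simp
  then have "ex L (Suc (p + k)) (on L (Suc (Suc (p + k)))) = sb L (p + k) (Suc (p + k)) (cyl (p + k)) (ex L (p + k) (on L (Suc (p + k))))"
    using sb_ops(2)[OF ext_substs[OF cs]] by simp
  then have "ex L (Suc (p + k)) (on L (Suc (Suc (p + k)))) \<in> Ps (Suc k)" using Q(2) Suc.IH by simp
  then show ?case using Q by simp
qed

lemma Ps_step: "a \<in> car L (p + k) \<Longrightarrow> a \<in> Ps k \<longleftrightarrow> sb L (p + k) (Suc (p + k)) (cyl (p + k)) a \<in> Ps (Suc k)"
  and Ps_req: "sreq k (Ps k) \<in> Ps (Suc k)"
proof -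
  have ok: "sreq k (Ps k) \<in> car L (Suc (p + k))" "ex L (p + k) (sreq k (Ps k)) \<in> Ps k"
    using sreq_ok Ps_inv by auto
  have ex: "\<exists>Q. PF (Suc (p + k)) Q \<and> (\<forall>a\<in>car L (p + k). a \<in> Ps k \<longleftrightarrow> sb L (p + k) (Suc (p + k)) (cyl (p + k)) a \<in> Q)
     \<and> sreq k (Ps k) \<in> Q" using step[OF _ ok] Ps_inv by blast
  have "PF (Suc (p + k)) (Ps (Suc k)) \<and> (\<forall>a\<in>car L (p + k). a \<in> Ps k \<longleftrightarrow> sb L (p + k) (Suc (p + k)) (cyl (p + k)) a \<in> Ps (Suc k))
     \<and> sreq k (Ps k) \<in> Ps (Suc k)"
    unfolding Ps.simps(2) by (rule someI_ex[OF ex])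
  then show "a \<in> car L (p + k) \<Longrightarrow> a \<in> Ps k \<longleftrightarrow> sb L (p + k) (Suc (p + k)) (cyl (p + k)) a \<in> Ps (Suc k)"
    and "sreq k (Ps k) \<in> Ps (Suc k)" by blast+
qed

lemma Ps_rel: "k < k' \<Longrightarrow> a \<in> car L (p + k) \<Longrightarrow> a \<in> Ps k \<longleftrightarrow> sb L (p + k) (p + k') (restrict id {1..p + k}) a \<in> Ps k'"
proof (induction k')
  case 0 then show ?case by simp
next
  case (Suc k')
  show ?case
  proof (cases "k = k'")
    case True
    have c: "cyl (p + k) = restrict id {1..p + k}" unfolding cyl_def ..
    show ?thesis using Ps_step[OF Suc.prems(2), unfolded c] True by (simp only: add_Suc_right)
  next
    case False
    then have kk: "k < k'" using Suc.prems by simp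
    have i1: "restrict id {1..p + k} \<in> substs (p + k) (p + k')" using incl_substs kk by simp
    have c: "cyl (p + k') \<in> substs (p + k') (Suc (p + k'))" by (rule cyl_substs)
    have "compose {1..p + k} (cyl (p + k')) (restrict id {1..p + k}) = restrict id {1..p + k}"
      using kk by (auto simp: compose_def cyl_def restrict_def fun_eq_iff)
    then have "sb L (p + k) (Suc (p + k')) (restrict id {1..p + k}) a =
       sb L (p + k') (Suc (p + k')) (cyl (p + k')) (sb L (p + k) (p + k') (restrict id {1..p + k}) a)"
      using sb_comp[OF i1 c Suc.prems(2)] by simp
    moreover have "sb L (p + k) (p + k') (restrict id {1..p + k}) a \<in> car L (p + k')" using i1 Suc.prems by simp
    ultimately show ?thesis using Suc.IH[OF kk Suc.prems(2)] Ps_step[of "sb L (p + k) (p + k') (restrict id {1..p + k}) a" k']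
      by (metis add_Suc_right)
  qed
qed

lemma factor: "(\<forall>x\<in>set us. idx x < j) \<Longrightarrow> j \<le> j' \<Longrightarrow> a \<in> car L (length us) \<Longrightarrow>
   sb L (length us) j' (sg us) a = sb L j j' (restrict id {1..j}) (sb L (length us) j (sg us) a)"
proof -
  assume h: "\<forall>x\<in>set us. idx x < j" "j \<le> j'" "a \<in> car L (length us)"
  have s: "sg us \<in> substs (length us) j" using sg_substs h by simp
  have "compose {1..length us} (restrict id {1..j}) (sg us) = sg us"
    using substs_PiE[OF s] by (auto simp: compose_def sg_def restrict_def fun_eq_iff)
  then show ?thesis using sb_comp[OF s incl_substs[OF h(2)] h(3)] by simp
qed

lemma T_at: "(\<forall>x\<in>set us. idx x < j) \<Longrightarrow> p \<le> j \<Longrightarrow> j \<le> M \<Longrightarrow> a \<in> car L (length us) \<Longrightarrow>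
   T (us, a) \<longleftrightarrow> sb L (length us) j (sg us) a \<in> Ps (j - p)"
proof -
  assume h: "\<forall>x\<in>set us. idx x < j" "p \<le> j" "j \<le> M" "a \<in> car L (length us)"
  have s: "sg us \<in> substs (length us) j" using sg_substs h by simp
  have "T (us, a) \<longleftrightarrow> sb L j (Suc M) (restrict id {1..j}) (sb L (length us) j (sg us) a) \<in> Ps (Suc M - p)"
    unfolding T_def using factor[OF h(1) _ h(4), of "Suc M"] h by simp
  also have "\<dots> \<longleftrightarrow> sb L (length us) j (sg us) a \<in> Ps (j - p)"
    using Ps_rel[of "j - p" "Suc M - p" "sb L (length us) j (sg us) a"] h s by simp
  finally show ?thesis .
qed

end

context ctx3 begin

declare Ps.simps(2)[simp del]

lemma idx_N: "set us \<subseteq> N \<Longrightarrow> \<forall>x\<in>set us. x \<in> set zs \<and> idx x < Suc M"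
  using idx_in set_zs by fastforce

lemma PFtop: "PF (Suc M) (Ps (Suc M - p))"
  using Ps_inv[of "Suc M - p"] pM by simp

lemma TL:
  assumes us: "set us \<subseteq> N" and a: "a \<in> car L (length us)" and b: "b \<in> car L (length us)"
  shows "T (us, mt L (length us) a b) = (T (us, a) \<and> T (us, b))"
    "T (us, jn L (length us) a b) = (T (us, a) \<or> T (us, b))"
    "T (us, on L (length us))" "\<not> T (us, zr L (length us))"
proof -
  have s: "sg us \<in> substs (length us) (Suc M)" using sg_substs idx_N[OF us] by auto
  have P: "PF (Suc M) (Ps (Suc M - p))" by (rule PFtop)
  interpret D: dl "car L (Suc M)" "mt L (Suc M)" "jn L (Suc M)" "zr L (Suc M)" "on L (Suc M)" by (rule dlL)
  have sa: "sb L (length us) (Suc M) (sg us) a \<in> car L (Suc M)" "sb L (length us) (Suc M) (sg us) b \<in> car L (Suc M)"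
    using s a b by auto
  show "T (us, mt L (length us) a b) = (T (us, a) \<and> T (us, b))"
    unfolding T_def using sb_ops(4)[OF s a b] P sa unfolding D.pf_def by auto
  show "T (us, jn L (length us) a b) = (T (us, a) \<or> T (us, b))"
    unfolding T_def using sb_ops(3)[OF s a b] P sa unfolding D.pf_def by auto
  show "T (us, on L (length us))" unfolding T_def using sb_ops(2)[OF s] P unfolding D.pf_def by auto
  show "\<not> T (us, zr L (length us))" unfolding T_def using sb_ops(1)[OF s] P unfolding D.pf_def by auto
qed

lemma sg_subst_tuple:
  assumes "\<alpha> \<in> substs n (length us)"
  shows "sg (subst_tuple n \<alpha> us) = compose {1..n} (sg us) \<alpha>"
proof (rule ext)
  fix i
  show "sg (subst_tuple n \<alpha> us) i = compose {1..n} (sg us) \<alpha> i"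
  proof (cases "i \<in> {1..n}")
    case True
    then have ai: "\<alpha> i \<in> {1..length us}" using substs_PiE[OF assms] by auto
    have "subst_tuple n \<alpha> us ! (i - 1) = us ! (\<alpha> i - 1)"
      using True nth_subst_tuple[of "i - 1" n \<alpha> us] by auto
    then show ?thesis using True ai unfolding sg_def compose_def by simp
  next
    case False
    then show ?thesis unfolding sg_def compose_def by auto
  qed
qed

lemma TS:
  assumes us: "set us \<subseteq> N" and al: "\<alpha> \<in> substs n (length us)" and a: "a \<in> car L n"
  shows "T (us, sb L n (length us) \<alpha> a) = T (subst_tuple n \<alpha> us, a)"
proof -
  have s: "sg us \<in> substs (length us) (Suc M)" using sg_substs idx_N[OF us] by auto
  show ?thesis unfolding T_def using sb_comp[OF al s a] sg_subst_tuple[OF al] by simp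
qed

lemma TB:
  assumes us: "set us \<subseteq> N \<inter> B" and a: "a \<in> car L (length us)"
  shows "T (us, a) = (map g us \<in> \<phi> (length us) a)"
proof -
  have i: "\<forall>x\<in>set us. idx x < p" using idx_bs bs_prop us by auto
  have s: "sg us \<in> substs (length us) p" using sg_substs i by auto
  have "T (us, a) = (sb L (length us) p (sg us) a \<in> Ps 0)"
    using T_at[OF i _ pM a] by simp
  also have "\<dots> = (map g bs \<in> \<phi> p (sb L (length us) p (sg us) a))"
    using s a by (simp add: P0_def)
  also have "\<dots> = (subst_tuple (length us) (sg us) (map g bs) \<in> \<phi> (length us) a)"
    using phi_sb[OF s a] bs_prop g_B unfolding tuples_def p_def by auto
  also have "subst_tuple (length us) (sg us) (map g bs) = map g us"
  proof (rule nth_equalityI)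
    show "length (subst_tuple (length us) (sg us) (map g bs)) = length (map g us)" by simp
    fix i assume "i < length (subst_tuple (length us) (sg us) (map g bs))"
    then have i': "i < length us" by simp
    then have x: "us ! i \<in> set bs" using us bs_prop by auto
    then have "idx (us ! i) < p" by (rule idx_bs)
    moreover have "zs ! idx (us ! i) = us ! i" using idx_in x unfolding zs_def by auto
    ultimately have "bs ! idx (us ! i) = us ! i" unfolding zs_def p_def by (simp add: nth_append)
    have e1: "subst_tuple (length us) (sg us) (map g bs) ! i = map g bs ! (sg us (Suc i) - 1)"
      by (rule nth_subst_tuple[OF i'])
    have e2: "sg us (Suc i) = Suc (idx (us ! i))" using i' unfolding sg_def by simp
    show "subst_tuple (length us) (sg us) (map g bs) ! i = map g us ! i"
      using e1 e2 \<open>bs ! idx (us ! i) = us ! i\<close> \<open>idx (us ! i) < p\<close> i' unfolding p_def by simp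
  qed
  finally show ?thesis .
qed

lemma TH:
  assumes us: "set us \<subseteq> N" and r: "r \<in> car L (Suc (length us))" and cN: "hn e0 e1 us r \<in> N"
    and T1: "T (us, ex L (length us) r)"
  shows "T (us @ [hn e0 e1 us r], r)"
proof -
  define c where "c = hn e0 e1 us r"
  define n where "n = length us"
  have "c \<in> set ns" using cN hn_notB ns_prop unfolding c_def by auto
  then obtain k where k: "k < length ns" "ns ! k = c" by (auto simp: in_set_conv_nth)
  have ik: "idx c = p + k" "zs ! (p + k) = c" using idx_ns[OF k(1)] k(2) by auto
  have pkM: "p + k < M" using k(1) unfolding M_def zs_def p_def by simp
  have lt: "idx x < p + k" if x: "x \<in> set us" for x
  proof (cases "x \<in> B")
    case True
    then have "x \<in> set bs" using bs_prop us x by auto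
    then show ?thesis using idx_bs[of x] by simp
  next
    case False
    then have "x \<in> set ns" using ns_prop us x by auto
    then obtain i where i: "i < length ns" "ns ! i = x" by (auto simp: in_set_conv_nth)
    have "length x < length c" using hn_len[OF x] unfolding c_def by simp
    then have "i < k"
    proof -
      have "\<not> k \<le> i"
      proof
        assume "k \<le> i"
        then have "length (ns ! k) \<le> length (ns ! i)"
          using sorted_nth_mono[of "map length ns" k i] ns_prop i(1) \<open>k \<le> i\<close> by simp
        then show False using \<open>length x < length c\<close> i k by simp
      qed
      then show ?thesis by simp
    qed
    then show ?thesis using idx_ns[OF i(1)] i by simp
  qed
  have inz: "\<forall>x\<in>set us. x \<in> set zs \<and> idx x < p + k" using lt us set_zs by auto
  have s: "sg us \<in> substs n (p + k)" using sg_substs inz n_def by auto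
  have hv: "hinv c = (us, r)"
  proof -
    have "\<exists>q. c = hn e0 e1 (fst q) (snd q)" unfolding c_def by (intro exI[of _ "(us, r)"]) simp
    then have "c = hn e0 e1 (fst (hinv c)) (snd (hinv c))" unfolding hinv_def by (rule someI_ex)
    then have "fst (hinv c) = us \<and> snd (hinv c) = r"
      using hn_inj[OF e01, of "fst (hinv c)" "snd (hinv c)" us r] unfolding c_def by simp
    then show ?thesis by (simp add: prod_eq_iff)
  qed
  have e: "sb L n (p + k) (sg us) (ex L n r) \<in> Ps k"
    using T_at[of us "p + k" "ex L n r"] inz T1 pkM r unfolding n_def by simp
  have sq: "sreq k (Ps k) = sb L (Suc n) (Suc (p + k)) (ext (sg us) n (p + k)) r"
    unfolding sreq_def Let_def using ik(2) hv inz e r n_def c_def by auto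
  have sr: "sb L (Suc n) (Suc (p + k)) (ext (sg us) n (p + k)) r \<in> Ps (Suc k)" using Ps_req[of k] unfolding sq .
  have sgc: "sg (us @ [c]) = ext (sg us) n (p + k)"
    using ik(1) unfolding sg_def ext_def n_def by (auto simp: fun_eq_iff nth_append)
  have inz2: "\<forall>x\<in>set (us @ [c]). idx x < Suc (p + k)" using inz ik by auto
  have "T (us @ [c], r) = (sb L (Suc n) (Suc (p + k)) (sg (us @ [c])) r \<in> Ps (Suc (p + k) - p))"
    using T_at[OF inz2, of r] pkM r unfolding n_def by simp
  then show ?thesis using sr sgc unfolding c_def by simp
qed

end

datatype 'a con = CL "'a list list" 'a 'a | CS "'a list list" nat "nat \<Rightarrow> nat" 'a | CH "'a list list" 'a | CB nat 'a 'a

lemma A_simps: "car (A W) n = Pow (tuples W n)"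
  "sb (A W) n k \<alpha> r = {xs \<in> tuples W k. subst_tuple n \<alpha> xs \<in> r}"
  "zr (A W) n = {}" "on (A W) n = tuples W n" "jn (A W) n x y = x \<union> y" "mt (A W) n x y = x \<inter> y"
  "ex (A W) n r = {xs \<in> tuples W n. \<exists>y\<in>W. xs @ [y] \<in> r}"
  by (simp_all add: A_def)

context ctx2 begin

definition "Cset = {CL us a b | us a b. a \<in> car L (length us) \<and> b \<in> car L (length us)}
  \<union> {CS us n \<alpha> a | us n \<alpha> a. \<alpha> \<in> substs n (length us) \<and> a \<in> car L n}
  \<union> {CH us r | us r. r \<in> car L (Suc (length us))} \<union> {CB n a a' | n a a'. (n,a,a') \<in> D}"

definition sat :: "'a con \<Rightarrow> ('a list list \<times> 'a \<Rightarrow> bool) \<Rightarrow> bool" where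
  "sat c T = (case c of
     CL us a b \<Rightarrow> (T (us, mt L (length us) a b) = (T (us,a) \<and> T (us,b))) \<and> (T (us, jn L (length us) a b) = (T (us,a) \<or> T (us,b)))
        \<and> T (us, on L (length us)) \<and> \<not> T (us, zr L (length us))
   | CS us n \<alpha> a \<Rightarrow> (T (us, sb L n (length us) \<alpha> a) = T (subst_tuple n \<alpha> us, a))
   | CH us r \<Rightarrow> (T (us, ex L (length us) r) \<longrightarrow> T (us @ [hn e0 e1 us r], r))
   | CB n a a' \<Rightarrow> (T (bt n a a', a) = (wit (n,a,a') \<in> \<phi> n a)) \<and> (T (bt n a a', a') = (wit (n,a,a') \<in> \<phi> n a')))"

definition supp :: "'a con \<Rightarrow> ('a list list \<times> 'a) set" where
  "supp c = (case c of
     CL us a b \<Rightarrow> {(us, mt L (length us) a b), (us,a), (us,b), (us, jn L (length us) a b), (us, on L (length us)), (us, zr L (length us))}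
   | CS us n \<alpha> a \<Rightarrow> {(us, sb L n (length us) \<alpha> a), (subst_tuple n \<alpha> us, a)}
   | CH us r \<Rightarrow> {(us, ex L (length us) r), (us @ [hn e0 e1 us r], r)}
   | CB n a a' \<Rightarrow> {(bt n a a', a), (bt n a a', a')})"

lemma CL_in: "a \<in> car L (length us) \<Longrightarrow> b \<in> car L (length us) \<Longrightarrow> CL us a b \<in> Cset"
  unfolding Cset_def by blast
lemma CS_in: "\<alpha> \<in> substs n (length us) \<Longrightarrow> a \<in> car L n \<Longrightarrow> CS us n \<alpha> a \<in> Cset"
  unfolding Cset_def by blast
lemma CH_in: "r \<in> car L (Suc (length us)) \<Longrightarrow> CH us r \<in> Cset"
  unfolding Cset_def by blast
lemma CB_in: "(n,a,a') \<in> D \<Longrightarrow> CB n a a' \<in> Cset"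
  unfolding Cset_def by blast

lemma supp_fin: "finite (supp c)"
  by (cases c) (simp_all add: supp_def)

lemma sat_loc: "(\<And>x. x \<in> supp c \<Longrightarrow> f x = h x) \<Longrightarrow> sat c f = sat c h"
  by (cases c) (simp_all add: supp_def sat_def)

lemma fsat: "F \<subseteq> Cset \<Longrightarrow> finite F \<Longrightarrow> \<exists>f. \<forall>c\<in>F. sat c f"
proof -
  assume F: "F \<subseteq> Cset" "finite F"
  define N where "N = (\<Union>c\<in>F. \<Union>x\<in>supp c. set (fst x))"
  have "finite N" unfolding N_def using F(2) supp_fin by auto
  then interpret C3: ctx3 L W \<phi> N by unfold_locales
  have sub: "set (fst x) \<subseteq> N" if "c \<in> F" "x \<in> supp c" for c x
    using that unfolding N_def by auto
  have "sat c C3.T" if c: "c \<in> F" for c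
  proof -
    have cC: "c \<in> Cset" using c F by auto
    show ?thesis
    proof (cases c)
      case (CL us a b)
      then have ab: "a \<in> car L (length us)" "b \<in> car L (length us)" using cC unfolding Cset_def by auto
      have "set us \<subseteq> N" using sub[OF c, of "(us, a)"] CL by (simp add: supp_def)
      then show ?thesis using C3.TL[OF _ ab] CL unfolding sat_def by simp
    next
      case (CS us n \<alpha> a)
      then have h: "\<alpha> \<in> substs n (length us)" "a \<in> car L n" using cC unfolding Cset_def by auto
      have "set us \<subseteq> N" using sub[OF c, of "(us, sb L n (length us) \<alpha> a)"] CS by (simp add: supp_def)
      then show ?thesis using C3.TS[OF _ h] CS unfolding sat_def by simp
    next
      case (CH us r)
      then have h: "r \<in> car L (Suc (length us))" using cC unfolding Cset_def by auto
      have "set (us @ [hn e0 e1 us r]) \<subseteq> N" using sub[OF c, of "(us @ [hn e0 e1 us r], r)"] CH by (simp add: supp_def)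
      then show ?thesis using C3.TH[OF _ h] CH unfolding sat_def by simp
    next
      case (CB n a a')
      then have d: "(n,a,a') \<in> D" using cC unfolding Cset_def by auto
      then have car: "a \<in> car L n" "a' \<in> car L n" unfolding D_def by auto
      have "set (bt n a a') \<subseteq> N" using sub[OF c, of "(bt n a a', a)"] CB by (simp add: supp_def)
      then have s: "set (bt n a a') \<subseteq> N \<inter> B" using bt_B[OF d] by auto
      have l: "length (bt n a a') = n" unfolding bt_def by simp
      show ?thesis using C3.TB[OF s] car l map_g_bt[OF d] CB unfolding sat_def by simp
    qed
  qed
  then show ?thesis by blast
qed

lemma model: "\<exists>(Wp :: 'a list set) (\<psi> :: nat \<Rightarrow> 'a \<Rightarrow> 'a list list set). morphism L Wp \<psi> \<and> ker L \<psi> \<subseteq> ker L \<phi>"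
proof -
  obtain T where T: "\<And>c. c \<in> Cset \<Longrightarrow> sat c T"
  proof -
    have "\<exists>f. \<forall>i\<in>Cset. sat i f"
      by (rule compactness[of Cset supp sat, OF supp_fin sat_loc fsat]) auto
    then show ?thesis using that by blast
  qed
  define \<psi> where "\<psi> n a = {xs \<in> tuples UNIV n. T (xs, a)}" for n a
  have TL: "T (xs, mt L n a b) = (T (xs,a) \<and> T (xs,b))" "T (xs, jn L n a b) = (T (xs,a) \<or> T (xs,b))"
     "T (xs, on L n)" "\<not> T (xs, zr L n)"
    if "length xs = n" "a \<in> car L n" "b \<in> car L n" for xs n a b
    using T[OF CL_in[of a xs b]] that unfolding sat_def by auto
  have TL0: "T (xs, on L n)" "\<not> T (xs, zr L n)" if "length xs = n" for xs n
    using TL[OF that zr_car zr_car] by auto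
  have TS: "T (xs, sb L n k \<alpha> a) = T (subst_tuple n \<alpha> xs, a)"
    if "length xs = k" "\<alpha> \<in> substs n k" "a \<in> car L n" for xs n k \<alpha> a
    using T[OF CS_in[of \<alpha> n xs a]] that unfolding sat_def by auto
  have TH: "T (xs, ex L n r) \<Longrightarrow> T (xs @ [hn e0 e1 xs r], r)"
    if "length xs = n" "r \<in> car L (Suc n)" for xs n r
    using T[OF CH_in[of r xs]] that unfolding sat_def by auto
  have hbase: "hom_base L UNIV \<psi>"
    unfolding hom_base_def A_simps
  proof (intro conjI allI ballI)
    fix n a assume "a \<in> car L n"
    show "\<psi> n a \<in> Pow (tuples UNIV n)" unfolding \<psi>_def by auto
  next
    fix n k \<alpha> a assume h: "\<alpha> \<in> substs n k" "a \<in> car L n"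
    show "\<psi> k (sb L n k \<alpha> a) = {xs \<in> tuples UNIV k. subst_tuple n \<alpha> xs \<in> \<psi> n a}"
      unfolding \<psi>_def tuples_UNIV using TS h by auto
  next
    fix n
    show "\<psi> n (zr L n) = {}" unfolding \<psi>_def tuples_UNIV using TL0 by auto
    show "\<psi> n (on L n) = tuples UNIV n" unfolding \<psi>_def tuples_UNIV using TL0 by auto
  next
    fix n a b assume h: "a \<in> car L n" "b \<in> car L n"
    show "\<psi> n (jn L n a b) = \<psi> n a \<union> \<psi> n b" unfolding \<psi>_def tuples_UNIV using TL h by auto
    show "\<psi> n (mt L n a b) = \<psi> n a \<inter> \<psi> n b" unfolding \<psi>_def tuples_UNIV using TL h by auto
  qed
  have "morphism L UNIV \<psi>" unfolding morphism_def
  proof (intro conjI allI ballI hbase)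
    fix n r assume r: "r \<in> car L (Suc n)"
    show "ex (A UNIV) n (\<psi> (Suc n) r) = \<psi> n (ex L n r)"
    proof
      show "ex (A UNIV) n (\<psi> (Suc n) r) \<subseteq> \<psi> n (ex L n r)"
      proof
        fix xs assume "xs \<in> ex (A UNIV) n (\<psi> (Suc n) r)"
        then obtain y where xy: "length xs = n" "T (xs @ [y], r)" unfolding A_simps \<psi>_def tuples_UNIV by auto
        have l: "length (xs @ [y]) = Suc n" using xy by simp
        have ec: "sb L n (Suc n) (cyl n) (ex L n r) \<in> car L (Suc n)" using r cyl_substs by simp
        have "r = mt L (Suc n) r (sb L n (Suc n) (cyl n) (ex L n r))" using ax8'[OF r] unfolding le_def .
        then have "T (xs @ [y], sb L n (Suc n) (cyl n) (ex L n r))" using TL(1)[OF l r ec] xy by metis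
        then have "T (subst_tuple n (cyl n) (xs @ [y]), ex L n r)" using TS[OF l cyl_substs] r by simp
        then show "xs \<in> \<psi> n (ex L n r)" unfolding \<psi>_def tuples_UNIV using subst_tuple_cyl[OF xy(1)] xy by simp
      qed
    next
      show "\<psi> n (ex L n r) \<subseteq> ex (A UNIV) n (\<psi> (Suc n) r)"
      proof
        fix xs assume "xs \<in> \<psi> n (ex L n r)"
        then have "length xs = n" "T (xs, ex L n r)" unfolding \<psi>_def tuples_UNIV by auto
        then have "T (xs @ [hn e0 e1 xs r], r)" using TH r by auto
        then show "xs \<in> ex (A UNIV) n (\<psi> (Suc n) r)" unfolding A_simps \<psi>_def tuples_UNIV
          using \<open>length xs = n\<close> by auto
      qed
    qed
  qed
  moreover have "ker L \<psi> \<subseteq> ker L \<phi>"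
  proof
    fix x assume "x \<in> ker L \<psi>"
    then obtain n a a' where x: "x = (n,a,a')" "a \<in> car L n" "a' \<in> car L n" "\<psi> n a = \<psi> n a'"
      unfolding ker_def by auto
    show "x \<in> ker L \<phi>"
    proof (rule ccontr)
      assume "x \<notin> ker L \<phi>"
      then have d: "(n,a,a') \<in> D" using x unfolding ker_def D_def by auto
      then have cb: "sat (CB n a a') T" using T CB_in by blast
      have l: "bt n a a' \<in> tuples UNIV n" unfolding bt_def tuples_UNIV by simp
      have "T (bt n a a', a) = T (bt n a a', a')" using x(4) l unfolding \<psi>_def by blast
      then show False using cb wit[OF d] unfolding sat_def by auto
    qed
  qed
  ultimately show ?thesis by blast
qed

end

context ctx begin

lemma tuples_empty: "tuples {} 0 = {[]}" "tuples {} (Suc n) = {}"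
  unfolding tuples_def by auto

lemma tuples_0: "tuples W 0 = {[]}" unfolding tuples_def by auto

lemma model_empty:
  assumes nne: "[] \<notin> \<phi> 0 (ex L 0 (on L 1))"
  shows "\<exists>(Wp :: 'a list set) (\<psi> :: nat \<Rightarrow> 'a \<Rightarrow> 'a list list set). morphism L Wp \<psi> \<and> ker L \<psi> \<subseteq> ker L \<phi>"
proof -
  have We: "W = {}"
  proof (rule ccontr)
    assume "W \<noteq> {}"
    then obtain w where w: "w \<in> W" by auto
    have "[w] \<in> \<phi> 1 (on L 1)" using phi_on w unfolding tuples_def by auto
    then have "[] \<in> {xs \<in> tuples W 0. \<exists>y\<in>W. xs @ [y] \<in> \<phi> (Suc 0) (on L (Suc 0))}" using w tuples_0 by auto
    then have "[] \<in> \<phi> 0 (ex L 0 (on L 1))" using phi_ex[of "on L (Suc 0)" 0] on_car[of "Suc 0"] by (simp only: One_nat_def) blast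
    then show False using nne by simp
  qed
  define \<psi> :: "nat \<Rightarrow> 'a \<Rightarrow> 'a list list set" where "\<psi> n a = (if n = 0 \<and> [] \<in> \<phi> 0 a then {[]} else {})" for n a
  have hbase: "hom_base L {} \<psi>"
    unfolding hom_base_def A_simps
  proof (intro conjI allI ballI)
    fix n a assume "a \<in> car L n"
    show "\<psi> n a \<in> Pow (tuples {} n)" unfolding \<psi>_def by (cases n) (auto simp: tuples_empty)
  next
    fix n k \<alpha> a assume h: "\<alpha> \<in> substs n k" "a \<in> car L n"
    show "\<psi> k (sb L n k \<alpha> a) = {xs \<in> tuples {} k. subst_tuple n \<alpha> xs \<in> \<psi> n a}"
    proof (cases k)
      case 0
      have n0: "n = 0"
      proof (rule ccontr)
        assume "n \<noteq> 0"
        then have "1 \<in> {1..n}" by auto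
        then have "\<alpha> 1 \<in> {1..k}" using substs_PiE[OF h(1)] by blast
        then show False using 0 by auto
      qed
      have st: "subst_tuple 0 \<alpha> [] = []" unfolding subst_tuple_def by simp
      have h0: "\<alpha> \<in> substs 0 0" "a \<in> car L 0" using h n0 0 by auto
      have "\<phi> 0 (sb L 0 0 \<alpha> a) = {xs \<in> {[]}. subst_tuple 0 \<alpha> xs \<in> \<phi> 0 a}"
        using phi_sb[OF h0] unfolding tuples_0 .
      then have "([] \<in> \<phi> 0 (sb L 0 0 \<alpha> a)) = (subst_tuple 0 \<alpha> [] \<in> \<phi> 0 a)" by simp
      then have e: "([] \<in> \<phi> 0 (sb L 0 0 \<alpha> a)) = ([] \<in> \<phi> 0 a)" unfolding st .
      show ?thesis unfolding 0 n0 \<psi>_def tuples_empty(1) using e st by auto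
    next
      case (Suc k')
      then show ?thesis unfolding \<psi>_def by (auto simp: tuples_empty)
    qed
  next
    fix n
    show "\<psi> n (zr L n) = {}" unfolding \<psi>_def using phi_zr by auto
    show "\<psi> n (on L n) = tuples {} n" unfolding \<psi>_def using phi_on tuples_0 by (cases n) (auto simp: tuples_empty)
  next
    fix n a b assume h: "a \<in> car L n" "b \<in> car L n"
    show "\<psi> n (jn L n a b) = \<psi> n a \<union> \<psi> n b" unfolding \<psi>_def using phi_jn h by auto
    show "\<psi> n (mt L n a b) = \<psi> n a \<inter> \<psi> n b" unfolding \<psi>_def using phi_mt h by auto
  qed
  have "morphism L {} \<psi>" unfolding morphism_def
  proof (intro conjI allI ballI hbase)
    fix n r assume r: "r \<in> car L (Suc n)"
    have "[] \<notin> \<phi> 0 (ex L 0 r)" if n0: "n = 0"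
    proof -
      interpret D1: dl "car L 1" "mt L 1" "jn L 1" "zr L 1" "on L 1" by (rule dlL)
      have "le L 1 r (on L 1)" using D1.leq_tp r n0 by (simp add: leq_eq)
      then have "le L 0 (ex L 0 r) (ex L 0 (on L 1))" using ex_mono[of r 0 "on L 1"] r n0 by simp
      then have "ex L 0 r = mt L 0 (ex L 0 r) (ex L 0 (on L 1))" unfolding le_def .
      then have "\<phi> 0 (ex L 0 r) \<subseteq> \<phi> 0 (ex L 0 (on L 1))" using phi_mt[of "ex L 0 r" 0 "ex L 0 (on L 1)"] r n0
        by (metis Int_lower2 One_nat_def ex_car on_car)
      then show ?thesis using nne by auto
    qed
    then show "ex (A {}) n (\<psi> (Suc n) r) = \<psi> n (ex L n r)" unfolding A_simps \<psi>_def by (auto simp: tuples_empty)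
  qed
  moreover have "ker L \<psi> \<subseteq> ker L \<phi>"
  proof
    fix x assume "x \<in> ker L \<psi>"
    then obtain n a a' where x: "x = (n,a,a')" "a \<in> car L n" "a' \<in> car L n" "\<psi> n a = \<psi> n a'"
      unfolding ker_def by auto
    have "\<phi> n a = \<phi> n a'"
    proof (cases n)
      case 0
      have "\<phi> 0 a \<subseteq> {[]}" "\<phi> 0 a' \<subseteq> {[]}" using phi_car[of a 0] phi_car[of a' 0] x 0 tuples_0 by auto
      moreover have "([] \<in> \<phi> 0 a) = ([] \<in> \<phi> 0 a')" using x(4) 0 unfolding \<psi>_def by (auto split: if_splits)
      ultimately show ?thesis using 0 by blast
    next
      case (Suc m)
      then show ?thesis using phi_car[OF x(2)] phi_car[OF x(3)] We by (simp add: tuples_empty)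
    qed
    then show "x \<in> ker L \<phi>" using x unfolding ker_def by auto
  qed
  ultimately show ?thesis by blast
qed

lemma main: "\<exists>(Wp :: 'a list set) (\<psi> :: nat \<Rightarrow> 'a \<Rightarrow> 'a list list set). morphism L Wp \<psi> \<and> ker L \<psi> \<subseteq> ker L \<phi>"
proof (cases "[] \<in> \<phi> 0 (ex L 0 (on L 1))")
  case True
  interpret C2: ctx2 L W \<phi> by unfold_locales (rule True)
  show ?thesis by (rule C2.model)
next
  case False
  then show ?thesis by (rule model_empty)
qed

end

lemma ker_inj:
  assumes "ker L \<psi> \<subseteq> ker L \<phi>" "inj_on (\<phi> n) (car L n)"
  shows "inj_on (\<psi> n) (car L n)"
proof (rule inj_onI)
  fix a b assume h: "a \<in> car L n" "b \<in> car L n" "\<psi> n a = \<psi> n b"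
  then have "(n, a, b) \<in> ker L \<phi>" using assms(1) unfolding ker_def by auto
  then show "a = b" using assms(2) h unfolding ker_def inj_on_def by auto
qed

theorem lemma4p14:
  fixes L :: "'a pe_alg" and W :: "'w set" and \<phi> :: "nat \<Rightarrow> 'a \<Rightarrow> 'w list set"
  assumes "pe_algebra L"
    and "almost_morphism L W \<phi>"
  shows "\<exists>(Wp :: 'a list set) (\<psi> :: nat \<Rightarrow> 'a \<Rightarrow> 'a list list set).
           morphism L Wp \<psi> \<and> ker L \<psi> \<subseteq> ker L \<phi> \<and>
           ((\<forall>n. inj_on (\<phi> n) (car L n)) \<longrightarrow> (\<forall>n. inj_on (\<psi> n) (car L n)))"
proof -
  interpret C: ctx L W \<phi> using assms by unfold_locales
  obtain Wp :: "'a list set" and \<psi> :: "nat \<Rightarrow> 'a \<Rightarrow> 'a list list set"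
    where h: "morphism L Wp \<psi>" "ker L \<psi> \<subseteq> ker L \<phi>" using C.main by blast
  then show ?thesis using ker_inj[OF h(2)] by blast
qed


end
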